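(* Let $\lambda,\tau_0\in S^{n-1}$ and $\tau_1\in\mathbb{R}^n$ with $\tau_0\perp\tau_1$, let $f_0>0$ and $t_0\in[0,L]$. If $\tau_0,\tau_1,\lambda$ are linearly independent, then the initial value problem \[ \tau''+|\tau'|^2\tau=\beta f^{-1}|\tau'|^2\,\mathrm{proj}^\perp_{\tau,\tau'}(\lambda),\quad f'=\beta\,\lambda\cdot\tau',\quad \tau(t_0)=\tau_0,\ \tau'(t_0)=\tau_1,\ f(t_0)=f_0 \] has a unique global solution $\tau\colon[0,L]\to S^{n-1}$, $f\colon[0,L]\to(0,\infty)$. For all $t\in[0,L]$ this solution satisfies $|\tau'(t)|=|\tau_1|$ and $\lambda\cdot\tau(t)\ne\pm1$, and $\tau(t)$ lies in the linear span of $\tau_0,\tau_1,\lambda$.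
   Context: $\beta\colon[0,L]\to(0,\infty)$ is a function of bounded variation, bounded and bounded away from $0$; solutions are understood in the sense of absolutely continuous (Carathéodory) solutions. $\mathrm{proj}^\perp_{V,W}$ is the orthogonal projection onto the orthogonal complement of the span of $V,W\in\mathbb{R}^n$. *)

theory Defs
  imports "HOL-Analysis.Analysis"
begin

definition bounded_variation_on :: "(real \<Rightarrow> real) \<Rightarrow> real \<Rightarrow> real \<Rightarrow> bool" where
  "bounded_variation_on g a b \<longleftrightarrow>
     (\<exists>M. \<forall>xs. sorted xs \<and> set xs \<subseteq> {a..b} \<longrightarrow>
        (\<Sum>i<length xs - 1. \<bar>g (xs ! Suc i) - g (xs ! i)\<bar>) \<le> M)"

definition proj_perp :: "'a::euclidean_space \<Rightarrow> 'a \<Rightarrow> 'a \<Rightarrow> 'a" where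
  "proj_perp V W x =
     (THE y. x - y \<in> span {V, W} \<and> (\<forall>z\<in>span {V, W}. orthogonal y z))"

text \<open>Absolutely continuous (Caratheodory) solution on [0,L] of
  tau'' + |tau'|^2 tau = beta f^{-1} |tau'|^2 proj_perp_{tau,tau'}(lam),  f' = beta lam . tau',
  tau(t0) = tau0, tau'(t0) = tau1, f(t0) = f0, with tau in the unit sphere and f > 0.
  tau is differentiable on [0,L] with derivative D, and D and f are given as
  indefinite Lebesgue integrals of the right-hand sides (i.e. they are absolutely
  continuous and satisfy the equations almost everywhere).\<close>
definition caratheodory_solution ::
  "(real \<Rightarrow> real) \<Rightarrow> 'a::euclidean_space \<Rightarrow> real \<Rightarrow> real \<Rightarrow> 'a \<Rightarrow> 'a \<Rightarrow> real
    \<Rightarrow> (real \<Rightarrow> 'a) \<Rightarrow> (real \<Rightarrow> real) \<Rightarrow> bool" where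
  "caratheodory_solution \<beta> lam L t0 \<tau>0 \<tau>1 f0 \<tau> f \<longleftrightarrow>
     (\<forall>t\<in>{0..L}. \<tau> differentiable (at t within {0..L})) \<and>
     (let D = (\<lambda>t. vector_derivative \<tau> (at t within {0..L}));
          G = (\<lambda>t. (\<beta> t * inverse (f t) * (norm (D t))\<^sup>2) *\<^sub>R proj_perp (\<tau> t) (D t) lam
                    - (norm (D t))\<^sup>2 *\<^sub>R \<tau> t);
          H = (\<lambda>t. \<beta> t * (lam \<bullet> D t))
      in G absolutely_integrable_on {0..L} \<and> H absolutely_integrable_on {0..L} \<and>
         (\<forall>s\<in>{0..L}. \<forall>t\<in>{0..L}. s \<le> t \<longrightarrow>
             (G has_integral (D t - D s)) {s..t} \<and> (H has_integral (f t - f s)) {s..t}) \<and>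
         \<tau> t0 = \<tau>0 \<and> D t0 = \<tau>1 \<and> f t0 = f0 \<and>
         (\<forall>t\<in>{0..L}. norm (\<tau> t) = 1 \<and> f t > 0))"

end

theory Submission
  imports Defs
begin

definition acf :: "real \<Rightarrow> (real \<Rightarrow> 'v::euclidean_space) \<Rightarrow> (real \<Rightarrow> 'v) \<Rightarrow> bool" where
 "acf L u u' \<longleftrightarrow> (\<forall>s t. 0 \<le> s \<longrightarrow> s \<le> t \<longrightarrow> t \<le> L \<longrightarrow> (u' has_integral (u t - u s)) {s..t})
     \<and> u' \<in> borel_measurable (lebesgue_on {0..L}) \<and> (\<exists>B. \<forall>t\<in>{0..L}. norm (u' t) \<le> B)"

lemma acf_lip:
  assumes "acf L u u'"
  obtains B where "B \<ge> 0" "\<And>s t. s \<in> {0..L} \<Longrightarrow> t \<in> {0..L} \<Longrightarrow> norm (u t - u s) \<le> B * \<bar>t - s\<bar>"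
proof -
  from assms obtain B where B: "\<forall>t\<in>{0..L}. norm (u' t) \<le> B" and I: "\<And>s t. 0 \<le> s \<Longrightarrow> s \<le> t \<Longrightarrow> t \<le> L \<Longrightarrow> (u' has_integral (u t - u s)) {s..t}"
    unfolding acf_def by blast
  define B' where "B' = max B 0"
  have *: "norm (u t - u s) \<le> B' * (t - s)" if "0 \<le> s" "s \<le> t" "t \<le> L" for s t
  proof -
    have "norm (u t - u s) \<le> B' * Henstock_Kurzweil_Integration.content (cbox s t)"
      apply (rule has_integral_bound[of B' u'])
      using I[OF that] B that by (auto simp: B'_def intro!: max.coboundedI1)
    then show ?thesis using that by simp
  qed
  show ?thesis
  proof (rule that[of B'])
    show "B' \<ge> 0" by (simp add: B'_def)
    fix s t assume st: "s \<in> {0..L}" "t \<in> {0..L}"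
    show "norm (u t - u s) \<le> B' * \<bar>t - s\<bar>"
    proof (cases "s \<le> t")
      case True then show ?thesis using *[of s t] st by auto
    next
      case False then show ?thesis using *[of t s] st by (auto simp: norm_minus_commute)
    qed
  qed
qed

lemma acf_cont:
  assumes "acf L u u'"
  shows "continuous_on {0..L} u"
proof -
  obtain B where B: "B \<ge> 0" "\<And>s t. s \<in> {0..L} \<Longrightarrow> t \<in> {0..L} \<Longrightarrow> norm (u t - u s) \<le> B * \<bar>t - s\<bar>"
    using acf_lip[OF assms] by blast
  have "B-lipschitz_on {0..L} u"
    by (rule lipschitz_onI) (use B in \<open>auto simp: dist_norm dist_real_def\<close>)
  then show ?thesis by (rule lipschitz_on_continuous_on)
qed

lemma bounded_meas_integrable:
  fixes g :: "real \<Rightarrow> 'v::euclidean_space"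
  assumes "g \<in> borel_measurable (lebesgue_on {0..L})" "\<forall>t\<in>{0..L}. norm (g t) \<le> B"
    and "0 \<le> s" "s \<le> t" "t \<le> L"
  shows "g integrable_on {s..t}"
proof -
  have "g absolutely_integrable_on {0..L}"
    by (rule measurable_bounded_by_integrable_imp_absolutely_integrable[where g="\<lambda>_. B"])
       (use assms in auto)
  then have "g integrable_on {0..L}" by (simp add: absolutely_integrable_on_def)
  then show ?thesis by (rule integrable_on_subinterval) (use assms in auto)
qed

lemma cont_meas:
  fixes u :: "real \<Rightarrow> 'v::euclidean_space"
  assumes "continuous_on {0..L} u"
  shows "u \<in> borel_measurable (lebesgue_on {0..L})"
  by (rule continuous_imp_measurable_on_sets_lebesgue[OF assms]) auto

lemma cont_bounded:
  fixes u :: "real \<Rightarrow> 'v::real_normed_vector"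
  assumes "continuous_on {0..L} u"
  obtains M where "M \<ge> 0" "\<And>t. t \<in> {0..L} \<Longrightarrow> norm (u t) \<le> M"
proof -
  have "compact (u ` {0..L})" by (rule compact_continuous_image[OF assms]) auto
  then obtain M where "M > 0" "\<forall>z\<in>u ` {0..L}. norm z \<le> M"
    using compact_imp_bounded bounded_pos by metis
  then show ?thesis using that[of M] by auto
qed

lemma grp_aux:
  fixes a b c p q :: "'c::ab_group_add"
  assumes "a + b = c" "p - a = q - c"
  shows "b = q - p"
proof -
  have "p - a = q - (a + b)" using assms by simp
  then have "p = q - b" by (metis add_diff_cancel_left' diff_diff_eq diff_add_cancel)
  then show ?thesis by (metis diff_diff_eq2 diff_self diff_zero add_diff_cancel_left' diff_add_cancel)
qed

lemma acf_prod:
  fixes x :: "real \<Rightarrow> 'a::euclidean_space" and y :: "real \<Rightarrow> 'b::euclidean_space"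
    and h :: "'a \<Rightarrow> 'b \<Rightarrow> 'c::euclidean_space"
  assumes bb: "bounded_bilinear h" and ax: "acf L x x'" and ay: "acf L y y'"
  shows "acf L (\<lambda>t. h (x t) (y t)) (\<lambda>t. h (x' t) (y t) + h (x t) (y' t))"
proof -
  interpret bounded_bilinear h by fact
  have bil: "bilinear h" using bb bilinear_conv_bounded_bilinear by blast
  obtain K where K: "K > 0" "\<And>a b. norm (h a b) \<le> norm a * norm b * K"
    using pos_bounded by blast
  from ax obtain Bx where Ix: "\<And>s t. 0 \<le> s \<Longrightarrow> s \<le> t \<Longrightarrow> t \<le> L \<Longrightarrow> (x' has_integral (x t - x s)) {s..t}"
    and mx: "x' \<in> borel_measurable (lebesgue_on {0..L})" and Bx0: "\<forall>t\<in>{0..L}. norm (x' t) \<le> Bx"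
    unfolding acf_def by blast
  from ay obtain By where Iy: "\<And>s t. 0 \<le> s \<Longrightarrow> s \<le> t \<Longrightarrow> t \<le> L \<Longrightarrow> (y' has_integral (y t - y s)) {s..t}"
    and my: "y' \<in> borel_measurable (lebesgue_on {0..L})" and By0: "\<forall>t\<in>{0..L}. norm (y' t) \<le> By"
    unfolding acf_def by blast
  define Bx' where "Bx' = max Bx 0"
  define By' where "By' = max By 0"
  have Bx: "\<And>t. t\<in>{0..L} \<Longrightarrow> norm (x' t) \<le> Bx'" "Bx' \<ge> 0" using Bx0 by (auto simp: Bx'_def intro: max.coboundedI1)
  have By: "\<And>t. t\<in>{0..L} \<Longrightarrow> norm (y' t) \<le> By'" "By' \<ge> 0" using By0 by (auto simp: By'_def intro: max.coboundedI1)
  have cx: "continuous_on {0..L} x" using acf_cont[OF ax] .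
  have cy: "continuous_on {0..L} y" using acf_cont[OF ay] .
  obtain Mx where Mx: "Mx \<ge> 0" "\<And>t. t \<in> {0..L} \<Longrightarrow> norm (x t) \<le> Mx" using cont_bounded[OF cx] by blast
  obtain My where My: "My \<ge> 0" "\<And>t. t \<in> {0..L} \<Longrightarrow> norm (y t) \<le> My" using cont_bounded[OF cy] by blast
  define z' where "z' = (\<lambda>t. h (x' t) (y t) + h (x t) (y' t))"
  have mz: "z' \<in> borel_measurable (lebesgue_on {0..L})"
    unfolding z'_def
    by (intro borel_measurable_add borel_measurable_bilinear[OF bil] mx my cont_meas cx cy) auto
  have bz: "\<forall>t\<in>{0..L}. norm (z' t) \<le> Bx' * My * K + Mx * By' * K"
  proof
    fix t assume t: "t \<in> {0..L}"
    have "norm (z' t) \<le> norm (h (x' t) (y t)) + norm (h (x t) (y' t))"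
      unfolding z'_def by (rule norm_triangle_ineq)
    also have "\<dots> \<le> norm (x' t) * norm (y t) * K + norm (x t) * norm (y' t) * K"
      by (intro add_mono K)
    also have "\<dots> \<le> Bx' * My * K + Mx * By' * K"
      using t Bx By Mx My K by (intro add_mono mult_right_mono mult_mono) auto
    finally show "norm (z' t) \<le> Bx' * My * K + Mx * By' * K" .
  qed
  have iz: "\<And>s t. 0 \<le> s \<Longrightarrow> s \<le> t \<Longrightarrow> t \<le> L \<Longrightarrow> z' integrable_on {s..t}"
    using bounded_meas_integrable[OF mz bz] by blast
  define C where "C = K * (2 * Bx' + By')"
  have C: "C \<ge> 0" unfolding C_def using K Bx By by auto
  have E: "norm (h (x b) (y b) - h (x a) (y a) - integral {a..b} z') \<le> C * \<eta> * (b - a)"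
    if ab: "0 \<le> a" "a \<le> b" "b \<le> L" and eta: "\<eta> \<ge> 0"
      and near: "\<And>r. r \<in> {a..b} \<Longrightarrow> norm (x r - x a) \<le> \<eta> \<and> norm (y r - y a) \<le> \<eta>" for a b \<eta>
  proof -
    have i1: "((\<lambda>r. h (x' r) (y a)) has_integral h (x b - x a) (y a)) {a..b}"
      using has_integral_linear[OF Ix[OF ab] bounded_linear_left[of "y a"]] by (simp add: o_def)
    have i2: "((\<lambda>r. h (x a) (y' r)) has_integral h (x a) (y b - y a)) {a..b}"
      using has_integral_linear[OF Iy[OF ab] bounded_linear_right[of "x a"]] by (simp add: o_def)
    have iz': "(z' has_integral integral {a..b} z') {a..b}" using iz[OF ab] by (simp add: integrable_integral)
    define e where "e = (\<lambda>r. z' r - h (x' r) (y a) - h (x a) (y' r))"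
    have ie: "(e has_integral (integral {a..b} z' - h (x b - x a) (y a) - h (x a) (y b - y a))) {a..b}"
      unfolding e_def by (intro has_integral_diff iz' i1 i2)
    have e_eq: "e r = h (x' r) (y r - y a) + h (x r - x a) (y' r)" for r
      unfolding e_def z'_def by (simp add: diff_right diff_left algebra_simps)
    have eb: "norm (e r) \<le> K * (Bx' + By') * \<eta>" if r: "r \<in> cbox a b" for r
    proof -
      have rL: "r \<in> {0..L}" using r ab by auto
      have "norm (e r) \<le> norm (h (x' r) (y r - y a)) + norm (h (x r - x a) (y' r))"
        unfolding e_eq by (rule norm_triangle_ineq)
      also have "\<dots> \<le> norm (x' r) * norm (y r - y a) * K + norm (x r - x a) * norm (y' r) * K"
        by (intro add_mono K)
      also have "\<dots> \<le> Bx' * \<eta> * K + \<eta> * By' * K"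
        using near[of r] r Bx(1)[OF rL] By(1)[OF rL] K Bx By eta
        by (intro add_mono mult_right_mono mult_mono) auto
      finally show ?thesis by (simp add: algebra_simps)
    qed
    have n1: "norm (integral {a..b} z' - h (x b - x a) (y a) - h (x a) (y b - y a)) \<le> K * (Bx' + By') * \<eta> * (b - a)"
      using has_integral_bound[OF _ ie[folded cbox_interval] eb] K Bx By eta ab by auto
    have dx: "norm (x b - x a) \<le> Bx' * (b - a)"
      using has_integral_bound[of Bx' x' "x b - x a" a b] Ix[OF ab] Bx ab by auto
    have dy: "norm (y b - y a) \<le> \<eta>" using near[of b] ab by auto
    have n2: "norm (h (x b - x a) (y b - y a)) \<le> K * Bx' * \<eta> * (b - a)"
    proof -
      have "norm (h (x b - x a) (y b - y a)) \<le> norm (x b - x a) * norm (y b - y a) * K" by (rule K)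
      also have "\<dots> \<le> (Bx' * (b - a)) * \<eta> * K"
        using dx dy K Bx(2) ab by (intro mult_right_mono mult_mono) auto
      finally show ?thesis by (simp add: algebra_simps)
    qed
    have split: "h (x b) (y b) - h (x a) (y a) - integral {a..b} z'
       = h (x b - x a) (y b - y a) - (integral {a..b} z' - h (x b - x a) (y a) - h (x a) (y b - y a))"
      by (simp add: diff_right diff_left algebra_simps)
    have "norm (h (x b) (y b) - h (x a) (y a) - integral {a..b} z')
        \<le> norm (h (x b - x a) (y b - y a)) + norm (integral {a..b} z' - h (x b - x a) (y a) - h (x a) (y b - y a))"
      unfolding split by (rule norm_triangle_ineq4)
    also have "\<dots> \<le> K * Bx' * \<eta> * (b - a) + K * (Bx' + By') * \<eta> * (b - a)"
      using n1 n2 by simp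
    also have "\<dots> = C * \<eta> * (b - a)" unfolding C_def by (simp add: algebra_simps)
    finally show ?thesis .
  qed
  define \<psi> where "\<psi> = (\<lambda>t. h (x t) (y t) - integral {0..t} z')"
  have der: "(\<psi> has_derivative (\<lambda>_. 0)) (at s within {0..L})" if s: "s \<in> {0..L}" for s
    unfolding has_derivative_within_alt
  proof (intro conjI allI impI)
    show "bounded_linear (\<lambda>_::real. 0::'c)" by simp
    fix e :: real assume e: "e > 0"
    define \<eta> where "\<eta> = e / (C + 1)"
    have eta: "\<eta> > 0" unfolding \<eta>_def using e C by auto
    have ucx: "uniformly_continuous_on {0..L} x" by (rule compact_uniformly_continuous[OF cx]) auto
    have ucy: "uniformly_continuous_on {0..L} y" by (rule compact_uniformly_continuous[OF cy]) auto
    obtain d1 where d1: "d1 > 0" "\<And>r r'. r \<in> {0..L} \<Longrightarrow> r' \<in> {0..L} \<Longrightarrow> dist r' r < d1 \<Longrightarrow> dist (x r') (x r) < \<eta>"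
      using ucx eta unfolding uniformly_continuous_on_def by metis
    obtain d2 where d2: "d2 > 0" "\<And>r r'. r \<in> {0..L} \<Longrightarrow> r' \<in> {0..L} \<Longrightarrow> dist r' r < d2 \<Longrightarrow> dist (y r') (y r) < \<eta>"
      using ucy eta unfolding uniformly_continuous_on_def by metis
    have main: "norm (\<psi> b - \<psi> a) \<le> e * (b - a)" if ab: "0 \<le> a" "a \<le> b" "b \<le> L" "b - a < min d1 d2" for a b
    proof -
      have near: "norm (x r - x a) \<le> \<eta> \<and> norm (y r - y a) \<le> \<eta>" if r: "r \<in> {a..b}" for r
        using d1(2)[of a r] d2(2)[of a r] r ab by (auto simp: dist_norm dist_real_def)
      have "integral {0..a} z' + integral {a..b} z' = integral {0..b} z'"
        by (rule Henstock_Kurzweil_Integration.integral_combine) (use ab iz in auto)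
      then have "\<psi> b - \<psi> a = h (x b) (y b) - h (x a) (y a) - integral {a..b} z'"
        unfolding \<psi>_def by (simp add: algebra_simps)
      then have "norm (\<psi> b - \<psi> a) \<le> C * \<eta> * (b - a)" using E[OF ab(1-3) _ near] eta by simp
      also have "\<dots> \<le> e * (b - a)"
      proof (rule mult_right_mono)
        have "C * \<eta> = e * (C / (C + 1))" unfolding \<eta>_def using C by (simp add: field_simps)
        also have "\<dots> \<le> e * 1" using C e by (intro mult_left_mono) auto
        finally show "C * \<eta> \<le> e" by simp
      qed (use ab in auto)
      finally show ?thesis .
    qed
    show "\<exists>d>0. \<forall>t\<in>{0..L}. norm (t - s) < d \<longrightarrow> norm (\<psi> t - \<psi> s - 0) \<le> e * norm (t - s)"
    proof (intro exI[of _ "min d1 d2"] conjI ballI impI)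
      show "0 < min d1 d2" using d1 d2 by auto
      fix t assume t: "t \<in> {0..L}" and d: "norm (t - s) < min d1 d2"
      show "norm (\<psi> t - \<psi> s - 0) \<le> e * norm (t - s)"
      proof (cases "s \<le> t")
        case True then show ?thesis using main[of s t] s t d by auto
      next
        case False then show ?thesis using main[of t s] s t d by (auto simp: norm_minus_commute)
      qed
    qed
  qed
  obtain c0 where c0: "\<And>t. t \<in> {0..L} \<Longrightarrow> \<psi> t = c0"
    using has_derivative_zero_constant[of "{0..L}" \<psi>] der by auto
  have ints: "(z' has_integral (h (x t) (y t) - h (x s) (y s))) {s..t}" if st: "0 \<le> s" "s \<le> t" "t \<le> L" for s t
  proof -
    have "integral {0..s} z' + integral {s..t} z' = integral {0..t} z'"
      by (rule Henstock_Kurzweil_Integration.integral_combine) (use st iz in auto)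
    moreover have "\<psi> s = \<psi> t" using c0[of s] c0[of t] st by auto
    ultimately have "integral {s..t} z' = h (x t) (y t) - h (x s) (y s)"
      unfolding \<psi>_def by (rule grp_aux)
    with iz[OF st] show ?thesis by (metis integrable_integral)
  qed
  show ?thesis
    unfolding acf_def using ints mz bz unfolding z'_def by blast
qed

lemma acf_linear:
  fixes f :: "'a::euclidean_space \<Rightarrow> 'b::euclidean_space"
  assumes "bounded_linear f" "acf L u u'"
  shows "acf L (\<lambda>t. f (u t)) (\<lambda>t. f (u' t))"
proof -
  interpret bounded_linear f by fact
  from assms(2) obtain B where I: "\<And>s t. 0 \<le> s \<Longrightarrow> s \<le> t \<Longrightarrow> t \<le> L \<Longrightarrow> (u' has_integral (u t - u s)) {s..t}"
    and m: "u' \<in> borel_measurable (lebesgue_on {0..L})" and B: "\<forall>t\<in>{0..L}. norm (u' t) \<le> B"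
    unfolding acf_def by blast
  obtain K where K: "\<And>x. norm (f x) \<le> norm x * K" "K \<ge> 0"
    using nonneg_bounded by blast
  have "((\<lambda>t. f (u' t)) has_integral (f (u t) - f (u s))) {s..t}" if "0 \<le> s" "s \<le> t" "t \<le> L" for s t
    using has_integral_linear[OF I[OF that] assms(1)] by (simp add: o_def diff)
  moreover have "(\<lambda>t. f (u' t)) \<in> borel_measurable (lebesgue_on {0..L})"
    using measurable_compose[OF m borel_measurable_continuous_onI[OF linear_continuous_on[OF assms(1)]]]
    by (simp add: o_def)
  moreover have "\<forall>t\<in>{0..L}. norm (f (u' t)) \<le> B * K"
    using B K by (meson mult_right_mono order_trans)
  ultimately show ?thesis unfolding acf_def by blast
qed

lemma acf_add:
  assumes "acf L u u'" "acf L v v'"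
  shows "acf L (\<lambda>t. u t + v t) (\<lambda>t. u' t + v' t)"
proof -
  from assms(1) obtain B where I: "\<And>s t. 0 \<le> s \<Longrightarrow> s \<le> t \<Longrightarrow> t \<le> L \<Longrightarrow> (u' has_integral (u t - u s)) {s..t}"
    and m: "u' \<in> borel_measurable (lebesgue_on {0..L})" and B: "\<forall>t\<in>{0..L}. norm (u' t) \<le> B"
    unfolding acf_def by blast
  from assms(2) obtain C where J: "\<And>s t. 0 \<le> s \<Longrightarrow> s \<le> t \<Longrightarrow> t \<le> L \<Longrightarrow> (v' has_integral (v t - v s)) {s..t}"
    and n: "v' \<in> borel_measurable (lebesgue_on {0..L})" and C: "\<forall>t\<in>{0..L}. norm (v' t) \<le> C"
    unfolding acf_def by blast
  have "((\<lambda>t. u' t + v' t) has_integral (u t + v t - (u s + v s))) {s..t}" if "0 \<le> s" "s \<le> t" "t \<le> L" for s t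
    using has_integral_add[OF I[OF that] J[OF that]] by (simp add: algebra_simps)
  moreover have "(\<lambda>t. u' t + v' t) \<in> borel_measurable (lebesgue_on {0..L})"
    using m n by measurable
  moreover have "\<forall>t\<in>{0..L}. norm (u' t + v' t) \<le> B + C"
    using B C by (meson add_mono norm_triangle_ineq order_trans)
  ultimately show ?thesis unfolding acf_def by blast
qed

lemma acf_const: "acf L (\<lambda>t. c) (\<lambda>t. 0)"
  unfolding acf_def by auto

lemma acf_scale:
  fixes u :: "real \<Rightarrow> 'a::euclidean_space"
  assumes "acf L u u'"
  shows "acf L (\<lambda>t. a *\<^sub>R u t) (\<lambda>t. a *\<^sub>R u' t)"
  using acf_linear[OF bounded_linear_scaleR_right assms] .

lemma acf_cmult:
  fixes u :: "real \<Rightarrow> real"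
  assumes "acf L u u'"
  shows "acf L (\<lambda>t. a * u t) (\<lambda>t. a * u' t)"
  using acf_linear[OF bounded_linear_mult_right assms] .

lemma acf_minus:
  fixes u :: "real \<Rightarrow> 'a::euclidean_space"
  assumes "acf L u u'" "acf L v v'"
  shows "acf L (\<lambda>t. u t - v t) (\<lambda>t. u' t - v' t)"
  using acf_add[OF assms(1) acf_scale[OF assms(2), of "-1"]] by simp

lemma acf_cong:
  assumes "acf L u u'" "\<And>t. t \<in> {0..L} \<Longrightarrow> u' t = v' t" "\<And>t. t \<in> {0..L} \<Longrightarrow> u t = v t"
  shows "acf L v v'"
proof -
  from assms(1) obtain B where I: "\<And>s t. 0 \<le> s \<Longrightarrow> s \<le> t \<Longrightarrow> t \<le> L \<Longrightarrow> (u' has_integral (u t - u s)) {s..t}"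
    and m: "u' \<in> borel_measurable (lebesgue_on {0..L})" and B: "\<forall>t\<in>{0..L}. norm (u' t) \<le> B"
    unfolding acf_def by blast
  have "(v' has_integral (v t - v s)) {s..t}" if st: "0 \<le> s" "s \<le> t" "t \<le> L" for s t
  proof -
    have "(u' has_integral (v t - v s)) {s..t}" using I[OF st] assms(3)[of s] assms(3)[of t] st by simp
    then show ?thesis by (rule has_integral_eq[rotated]) (use st assms(2) in auto)
  qed
  moreover have "v' \<in> borel_measurable (lebesgue_on {0..L})"
    using m by (rule measurable_cong[THEN iffD1, rotated]) (use assms(2) in auto)
  moreover have "\<forall>t\<in>{0..L}. norm (v' t) \<le> B" using B assms(2) by auto
  ultimately show ?thesis unfolding acf_def by blast
qed

lemma acf_pair:
  fixes u :: "real \<Rightarrow> 'a::euclidean_space" and v :: "real \<Rightarrow> 'b::euclidean_space"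
  assumes "acf L u u'" "acf L v v'"
  shows "acf L (\<lambda>t. (u t, v t)) (\<lambda>t. (u' t, v' t))"
proof -
  have l1: "bounded_linear (\<lambda>x::'a. (x, 0::'b))"
    by (intro bounded_linear_Pair bounded_linear_ident bounded_linear_zero)
  have l2: "bounded_linear (\<lambda>x::'b. (0::'a, x))"
    by (intro bounded_linear_Pair bounded_linear_ident bounded_linear_zero)
  show ?thesis using acf_add[OF acf_linear[OF l1 assms(1)] acf_linear[OF l2 assms(2)]] by simp
qed

lemma gronwall_local:
  fixes Q :: "real \<Rightarrow> 'v::euclidean_space"
  assumes ac: "acf L Q q" and K: "K \<ge> 0" and bnd: "\<And>t. t \<in> {0..L} \<Longrightarrow> norm (q t) \<le> K * norm (Q t)"
    and a: "a \<in> {0..L}" "Q a = 0" and h: "h > 0" "K * h \<le> 1/2"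
  shows "\<And>t. t \<in> {0..L} \<Longrightarrow> \<bar>t - a\<bar> \<le> h \<Longrightarrow> Q t = 0"
proof -
  from ac have I: "\<And>s t. 0 \<le> s \<Longrightarrow> s \<le> t \<Longrightarrow> t \<le> L \<Longrightarrow> (q has_integral (Q t - Q s)) {s..t}"
    unfolding acf_def by blast
  have cQ: "continuous_on {0..L} Q" using acf_cont[OF ac] .
  have right: "Q t = 0" if t: "t \<in> {0..L}" "a \<le> t" "t \<le> a + h" for t
  proof -
    define J where "J = {a..min (a+h) L}"
    have JL: "J \<subseteq> {0..L}" using a unfolding J_def by auto
    have "compact J" "J \<noteq> {}" using a h unfolding J_def by auto
    moreover have "continuous_on J (\<lambda>t. norm (Q t))" using continuous_on_subset[OF cQ JL] by (intro continuous_intros)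
    ultimately obtain r where r: "r \<in> J" "\<And>y. y \<in> J \<Longrightarrow> norm (Q y) \<le> norm (Q r)"
      using continuous_attains_sup by metis
    define m where "m = norm (Q r)"
    have "norm (Q r - Q a) \<le> (K * m) * Henstock_Kurzweil_Integration.content (cbox a r)"
    proof (rule has_integral_bound)
      show "0 \<le> K * m" using K m_def by auto
      show "(q has_integral (Q r - Q a)) (cbox a r)" using I[of a r] r a unfolding J_def by auto
      fix y assume y: "y \<in> cbox a r"
      then have "y \<in> J" using r unfolding J_def by auto
      then show "norm (q y) \<le> K * m"
        using bnd[of y] JL r(2)[of y] K unfolding m_def by (meson mult_left_mono order_trans subsetD)
    qed
    also have "\<dots> \<le> (K * m) * h" using r K h unfolding J_def m_def by (intro mult_left_mono) auto
    finally have "m \<le> K * h * m" using a m_def by (simp add: algebra_simps)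
    also have "\<dots> \<le> m / 2" using h m_def by (metis mult_right_mono norm_ge_zero times_divide_eq_left mult_1)
    finally have "m \<le> 0" by simp
    then show ?thesis using r(2)[of t] t unfolding J_def m_def by auto
  qed
  have left: "Q t = 0" if t: "t \<in> {0..L}" "t \<le> a" "a - h \<le> t" for t
  proof -
    define J where "J = {max (a-h) 0..a}"
    have JL: "J \<subseteq> {0..L}" using a unfolding J_def by auto
    have "compact J" "J \<noteq> {}" using a h unfolding J_def by auto
    moreover have "continuous_on J (\<lambda>t. norm (Q t))" using continuous_on_subset[OF cQ JL] by (intro continuous_intros)
    ultimately obtain r where r: "r \<in> J" "\<And>y. y \<in> J \<Longrightarrow> norm (Q y) \<le> norm (Q r)"
      using continuous_attains_sup by metis
    define m where "m = norm (Q r)"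
    have "norm (Q a - Q r) \<le> (K * m) * Henstock_Kurzweil_Integration.content (cbox r a)"
    proof (rule has_integral_bound)
      show "0 \<le> K * m" using K m_def by auto
      show "(q has_integral (Q a - Q r)) (cbox r a)" using I[of r a] r a unfolding J_def by auto
      fix y assume y: "y \<in> cbox r a"
      then have "y \<in> J" using r unfolding J_def by auto
      then show "norm (q y) \<le> K * m"
        using bnd[of y] JL r(2)[of y] K unfolding m_def by (meson mult_left_mono order_trans subsetD)
    qed
    also have "\<dots> \<le> (K * m) * h" using r K h unfolding J_def m_def by (intro mult_left_mono) auto
    finally have "m \<le> K * h * m" using a m_def by (simp add: algebra_simps)
    also have "\<dots> \<le> m / 2" using h m_def by (metis mult_right_mono norm_ge_zero times_divide_eq_left mult_1)
    finally have "m \<le> 0" by simp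
    then show ?thesis using r(2)[of t] t unfolding J_def m_def by auto
  qed
  fix t assume "t \<in> {0..L}" "\<bar>t - a\<bar> \<le> h"
  then show "Q t = 0" using left right by (cases "a \<le> t") auto
qed

lemma gronwall_zero:
  fixes Q :: "real \<Rightarrow> 'v::euclidean_space"
  assumes ac: "acf L Q q" and K: "K \<ge> 0" and bnd: "\<And>t. t \<in> {0..L} \<Longrightarrow> norm (q t) \<le> K * norm (Q t)"
    and t0: "t0 \<in> {0..L}" "Q t0 = 0"
  shows "\<And>t. t \<in> {0..L} \<Longrightarrow> Q t = 0"
proof -
  define h where "h = 1 / (2 * K + 2)"
  have h: "h > 0" "K * h \<le> 1/2" using K unfolding h_def by (auto simp: field_simps)
  have step: "\<forall>t\<in>{0..L}. \<bar>t - t0\<bar> \<le> real n * h \<longrightarrow> Q t = 0" for n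
  proof (induction n)
    case 0 then show ?case using t0 by auto
  next
    case (Suc n)
    show ?case
    proof (intro ballI impI)
      fix t assume t: "t \<in> {0..L}" "\<bar>t - t0\<bar> \<le> real (Suc n) * h"
      have nh: "real n * h \<ge> 0" using h by simp
      show "Q t = 0"
      proof (cases "\<bar>t - t0\<bar> \<le> real n * h")
        case True then show ?thesis using Suc t by auto
      next
        case False
        show ?thesis
        proof (cases "t0 \<le> t")
          case True
          define a where "a = t0 + real n * h"
          have a: "a \<in> {0..L}" using False True t t0 h nh unfolding a_def by auto
          have Qa: "Q a = 0" using Suc a t0 h nh unfolding a_def by auto
          show ?thesis
            by (rule gronwall_local[OF ac K bnd a Qa h t(1)]) (use t True False in \<open>auto simp: a_def algebra_simps\<close>)
        next
          case False': False
          define a where "a = t0 - real n * h"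
          have "a \<le> t0" "t \<le> a" using nh False False' unfolding a_def by linarith+
          then have a: "a \<in> {0..L}" using t t0 by auto
          have Qa: "Q a = 0" using Suc a t0 h nh unfolding a_def by auto
          show ?thesis
            by (rule gronwall_local[OF ac K bnd a Qa h t(1)]) (use t False' False in \<open>auto simp: a_def algebra_simps\<close>)
        qed
      qed
    qed
  qed
  fix t assume t: "t \<in> {0..L}"
  obtain n where n: "L / h \<le> real n" using real_arch_simple by blast
  have "L \<le> real n * h" using n h by (simp add: field_simps)
  moreover have "\<bar>t - t0\<bar> \<le> L" using t t0 by auto
  ultimately show "Q t = 0" using step[of n] t by auto
qed

lemma pow_integral_left:
  assumes "a \<le> b"
  shows "((\<lambda>r. (r - a) ^ n) has_integral ((b - a) ^ Suc n / real (Suc n))) {a..b}"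
proof -
  have "((\<lambda>r. (r - a) ^ Suc n / real (Suc n)) has_vector_derivative (r - a) ^ n) (at r within {a..b})" for r
    apply (auto intro!: derivative_eq_intros simp: has_real_derivative_iff_has_vector_derivative[symmetric])
    apply (cases n, auto simp: field_simps)
    done
  from fundamental_theorem_of_calculus[OF assms this] show ?thesis by simp
qed

lemma pow_integral_right:
  assumes "a \<le> b"
  shows "((\<lambda>r. (b - r) ^ n) has_integral ((b - a) ^ Suc n / real (Suc n))) {a..b}"
proof -
  have "((\<lambda>r. - ((b - r) ^ Suc n / real (Suc n))) has_vector_derivative (b - r) ^ n) (at r within {a..b})" for r
    apply (auto intro!: derivative_eq_intros simp: has_real_derivative_iff_has_vector_derivative[symmetric])
    apply (cases n, auto simp: field_simps)
    done
  from fundamental_theorem_of_calculus[OF assms this] show ?thesis by simp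
qed

definition clp :: "real \<Rightarrow> real \<Rightarrow> real" where "clp L t = max 0 (min L t)"

lemma clp_in: "L \<ge> 0 \<Longrightarrow> clp L t \<in> {0..L}" by (auto simp: clp_def)
lemma clp_id: "t \<in> {0..L} \<Longrightarrow> clp L t = t" by (auto simp: clp_def)
lemma clp_cont: "continuous_on UNIV (clp L)" unfolding clp_def by (intro continuous_intros)

lemma ext_bcontfun:
  fixes f :: "real \<Rightarrow> 'v::real_normed_vector"
  assumes "continuous_on {0..L} f" "L \<ge> 0"
  shows "(\<lambda>t. f (clp L t)) \<in> bcontfun"
proof -
  have "continuous_on UNIV (\<lambda>t. f (clp L t))"
    by (rule continuous_on_compose2[OF assms(1) clp_cont]) (use clp_in assms in auto)
  moreover have "bounded (range (\<lambda>t. f (clp L t)))"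
  proof -
    have "range (\<lambda>t. f (clp L t)) \<subseteq> f ` {0..L}" using clp_in assms by auto
    moreover have "bounded (f ` {0..L})" by (intro compact_imp_bounded compact_continuous_image assms) auto
    ultimately show ?thesis by (rule bounded_subset[rotated])
  qed
  ultimately show ?thesis unfolding bcontfun_def by auto
qed

lemma fact_small:
  fixes c :: real
  assumes "c \<ge> 0"
  shows "\<exists>N. c ^ N / fact N \<le> 1/2 \<and> N > 0"
proof -
  have "(\<lambda>n. inverse (fact n) * c ^ n) \<longlonglongrightarrow> 0"
    using summable_LIMSEQ_zero[OF summable_exp] .
  from tendstoD[OF this, of "1/2"] have "eventually (\<lambda>n. norm (inverse (fact n) * c ^ n) < 1/2) sequentially"
    by (simp add: dist_norm)
  then obtain N where "\<And>n. n \<ge> N \<Longrightarrow> norm (inverse (fact n) * c ^ n) < 1/2"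
    unfolding eventually_sequentially by blast
  from this[of "Suc N"] assms show ?thesis
    by (intro exI[of _ "Suc N"]) (auto simp: field_simps)
qed

lemma ode_exists:
  fixes F :: "real \<Rightarrow> 'v::euclidean_space \<Rightarrow> 'v"
  assumes L: "L > 0" and t0: "t0 \<in> {0..L}"
    and meas: "\<And>u. continuous_on {0..L} u \<Longrightarrow> (\<lambda>t. F t (u t)) \<in> borel_measurable (lebesgue_on {0..L})"
    and bnd: "\<And>u. continuous_on {0..L} u \<Longrightarrow> \<exists>B. \<forall>t\<in>{0..L}. norm (F t (u t)) \<le> B"
    and lip: "\<And>t x y. t \<in> {0..L} \<Longrightarrow> norm (F t x - F t y) \<le> K * norm (x - y)" and K: "K \<ge> 0"
  shows "\<exists>u. acf L u (\<lambda>t. F t (u t)) \<and> u t0 = x0"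
proof -
  have gint: "(\<lambda>r. F r (u r)) integrable_on {s..t}"
    if uc: "continuous_on {0..L} u" and st: "0 \<le> s" "s \<le> t" "t \<le> L" for u :: "real \<Rightarrow> 'v" and s t
  proof -
    obtain B where "\<forall>t\<in>{0..L}. norm (F t (u t)) \<le> B" using bnd[OF uc] by blast
    then show ?thesis using bounded_meas_integrable[OF meas[OF uc]] st by blast
  qed
  define \<Phi> where "\<Phi> = (\<lambda>(w::real \<Rightarrow>\<^sub>C 'v) t. x0 + integral {0..t} (\<lambda>r. F r (w r)) - integral {0..t0} (\<lambda>r. F r (w r)))"
  have wc: "continuous_on {0..L} (apply_bcontfun w)" for w :: "real \<Rightarrow>\<^sub>C 'v" by simp
  have \<Phi>c: "continuous_on {0..L} (\<Phi> w)" for w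
    unfolding \<Phi>_def using indefinite_integral_continuous_1[OF gint[OF wc, of 0 L]] L
    by (intro continuous_intros) auto
  define T where "T = (\<lambda>w. Bcontfun (\<lambda>t. \<Phi> w (clp L t)))"
  have Tapp: "apply_bcontfun (T w) t = \<Phi> w (clp L t)" for w t
    unfolding T_def using Bcontfun_inverse[OF ext_bcontfun[OF \<Phi>c, of w]] L by simp
  have Tdiff: "norm (T a t - T b t) \<le> norm (if t0 \<le> clp L t then integral {t0..clp L t} (\<lambda>r. F r (a r) - F r (b r))
       else integral {clp L t..t0} (\<lambda>r. F r (a r) - F r (b r)))" for a b t
  proof -
    define s where "s = clp L t"
    have s: "s \<in> {0..L}" using clp_in L s_def by auto
    define ga where "ga = (\<lambda>r. F r (a r))"
    define gb where "gb = (\<lambda>r. F r (b r))"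
    have ia: "\<And>x y. 0 \<le> x \<Longrightarrow> x \<le> y \<Longrightarrow> y \<le> L \<Longrightarrow> ga integrable_on {x..y}" unfolding ga_def using gint[OF wc] by blast
    have ib: "\<And>x y. 0 \<le> x \<Longrightarrow> x \<le> y \<Longrightarrow> y \<le> L \<Longrightarrow> gb integrable_on {x..y}" unfolding gb_def using gint[OF wc] by blast
    have "T a t - T b t = (integral {0..s} ga - integral {0..t0} ga) - (integral {0..s} gb - integral {0..t0} gb)"
      unfolding Tapp \<Phi>_def s_def ga_def gb_def by (simp add: algebra_simps)
    also have "\<dots> = (if t0 \<le> s then integral {t0..s} (\<lambda>r. ga r - gb r) else - integral {s..t0} (\<lambda>r. ga r - gb r))"
    proof (cases "t0 \<le> s")
      case True
      have A: "integral {0..s} ga = integral {0..t0} ga + integral {t0..s} ga"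
        by (rule Henstock_Kurzweil_Integration.integral_combine[symmetric]) (use True s t0 ia in auto)
      have B: "integral {0..s} gb = integral {0..t0} gb + integral {t0..s} gb"
        by (rule Henstock_Kurzweil_Integration.integral_combine[symmetric]) (use True s t0 ib in auto)
      have C: "integral {t0..s} (\<lambda>r. ga r - gb r) = integral {t0..s} ga - integral {t0..s} gb"
        by (rule integral_diff) (use True s t0 ia ib in auto)
      show ?thesis using True by (simp add: A B C algebra_simps)
    next
      case False
      have A: "integral {0..t0} ga = integral {0..s} ga + integral {s..t0} ga"
        by (rule Henstock_Kurzweil_Integration.integral_combine[symmetric]) (use False s t0 ia in auto)
      have B: "integral {0..t0} gb = integral {0..s} gb + integral {s..t0} gb"
        by (rule Henstock_Kurzweil_Integration.integral_combine[symmetric]) (use False s t0 ib in auto)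
      have C: "integral {s..t0} (\<lambda>r. ga r - gb r) = integral {s..t0} ga - integral {s..t0} gb"
        by (rule integral_diff) (use False s t0 ia ib in auto)
      show ?thesis using False by (simp add: A B C algebra_simps)
    qed
    finally show ?thesis unfolding s_def ga_def gb_def by (auto simp: norm_minus_commute)
  qed
  have est: "norm ((T ^^ n) a t - (T ^^ n) b t) \<le> (K * \<bar>t - t0\<bar>) ^ n / fact n * dist a b"
    if "t \<in> {0..L}" for n a b t
    using that
  proof (induction n arbitrary: t)
    case 0
    then show ?case using dist_bounded[of a t b] by (simp add: dist_norm)
  next
    case (Suc n)
    define a' where "a' = (T ^^ n) a"
    define b' where "b' = (T ^^ n) b"
    define D where "D = dist a b"
    have D: "D \<ge> 0" unfolding D_def by simp
    have ct: "clp L t = t" using Suc.prems clp_id by auto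
    define bf where "bf = (\<lambda>r. K * ((K * \<bar>r - t0\<bar>) ^ n / fact n * D))"
    have pt: "norm (F r (a' r) - F r (b' r)) \<le> bf r" if "r \<in> {0..L}" for r
    proof -
      have "norm (F r (a' r) - F r (b' r)) \<le> K * norm (a' r - b' r)" using lip that by blast
      also have "\<dots> \<le> bf r" unfolding bf_def a'_def b'_def D_def using Suc.IH[OF that] K by (rule mult_left_mono)
      finally show ?thesis .
    qed
    have idiff: "(\<lambda>r. F r (a' r) - F r (b' r)) integrable_on {x..y}" if "0 \<le> x" "x \<le> y" "y \<le> L" for x y
      using integrable_diff[OF gint[OF wc that] gint[OF wc that]] by simp
    have "norm ((T ^^ Suc n) a t - (T ^^ Suc n) b t) = norm (T a' t - T b' t)" unfolding a'_def b'_def by simp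
    also have "\<dots> \<le> (K * \<bar>t - t0\<bar>) ^ Suc n / fact (Suc n) * D"
    proof (cases "t0 \<le> t")
      case True
      have hi: "(bf has_integral (K * ((K ^ n / fact n) * D) * ((t - t0) ^ Suc n / real (Suc n)))) {t0..t}"
      proof -
        have "((\<lambda>r. K * ((K ^ n / fact n) * D) * (r - t0) ^ n) has_integral (K * ((K ^ n / fact n) * D) * ((t - t0) ^ Suc n / real (Suc n)))) {t0..t}"
          by (intro has_integral_mult_right pow_integral_left True)
        then show ?thesis
          by (rule has_integral_eq[rotated]) (auto simp: bf_def power_mult_distrib)
      qed
      have "norm (T a' t - T b' t) \<le> norm (integral {t0..t} (\<lambda>r. F r (a' r) - F r (b' r)))"
        using Tdiff[of a' t b'] True ct by simp
      also have "\<dots> \<le> integral {t0..t} bf"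
        by (rule integral_norm_bound_integral) (use idiff True t0 Suc.prems hi pt in auto)
      also have "\<dots> = K * ((K ^ n / fact n) * D) * ((t - t0) ^ Suc n / real (Suc n))"
        using hi by (rule integral_unique)
      also have "\<dots> = (K * \<bar>t - t0\<bar>) ^ Suc n / fact (Suc n) * D"
      proof -
        have e: "(K * \<bar>t - t0\<bar>) ^ Suc n = K * K ^ n * ((t - t0) * (t - t0) ^ n)"
          using True by (simp add: power_mult_distrib)
        show ?thesis unfolding e fact_Suc by (simp add: field_simps)
      qed
      finally show ?thesis .
    next
      case False
      have hi: "(bf has_integral (K * ((K ^ n / fact n) * D) * ((t0 - t) ^ Suc n / real (Suc n)))) {t..t0}"
      proof -
        have "((\<lambda>r. K * ((K ^ n / fact n) * D) * (t0 - r) ^ n) has_integral (K * ((K ^ n / fact n) * D) * ((t0 - t) ^ Suc n / real (Suc n)))) {t..t0}"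
          using False by (intro has_integral_mult_right pow_integral_right) auto
        then show ?thesis
          by (rule has_integral_eq[rotated]) (auto simp: bf_def power_mult_distrib)
      qed
      have "norm (T a' t - T b' t) \<le> norm (integral {t..t0} (\<lambda>r. F r (a' r) - F r (b' r)))"
        using Tdiff[of a' t b'] False ct by simp
      also have "\<dots> \<le> integral {t..t0} bf"
        by (rule integral_norm_bound_integral) (use idiff False t0 Suc.prems hi pt in auto)
      also have "\<dots> = K * ((K ^ n / fact n) * D) * ((t0 - t) ^ Suc n / real (Suc n))"
        using hi by (rule integral_unique)
      also have "\<dots> = (K * \<bar>t - t0\<bar>) ^ Suc n / fact (Suc n) * D"
      proof -
        have e: "(K * \<bar>t - t0\<bar>) ^ Suc n = K * K ^ n * ((t0 - t) * (t0 - t) ^ n)"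
          using False by (simp add: power_mult_distrib)
        show ?thesis unfolding e fact_Suc by (simp add: field_simps)
      qed
      finally show ?thesis .
    qed
    finally show ?case unfolding D_def .
  qed
  obtain N where N: "(K * L) ^ N / fact N \<le> 1/2" "N > 0" using fact_small[of "K * L"] K L by auto
  have contr: "dist ((T ^^ N) a) ((T ^^ N) b) \<le> 1/2 * dist a b" for a b
  proof (rule dist_bound)
    fix t
    obtain m where m: "N = Suc m" using N(2) gr0_implies_Suc by blast
    have e1: "(T ^^ N) a t = (T ^^ N) a (clp L t)" "(T ^^ N) b t = (T ^^ N) b (clp L t)"
      unfolding m by (simp_all add: Tapp clp_id[OF clp_in] L less_imp_le)
    have c: "clp L t \<in> {0..L}" using clp_in L by auto
    have "dist ((T ^^ N) a t) ((T ^^ N) b t) = norm ((T ^^ N) a (clp L t) - (T ^^ N) b (clp L t))"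
      unfolding dist_norm by (simp only: e1(1)[symmetric] e1(2)[symmetric])
    also have "\<dots> \<le> (K * \<bar>clp L t - t0\<bar>) ^ N / fact N * dist a b"
      using est[OF c] .
    also have "\<dots> \<le> (K * L) ^ N / fact N * dist a b"
      using c t0 K by (intro mult_right_mono divide_right_mono power_mono mult_left_mono) auto
    also have "\<dots> \<le> 1/2 * dist a b" using N by (intro mult_right_mono) auto
    finally show "dist ((T ^^ N) a t) ((T ^^ N) b t) \<le> 1/2 * dist a b" .
  qed
  have "\<exists>!x. (T ^^ N) x = x"
    by (rule banach_fix_type[of "1/2" "T ^^ N"]) (use contr in auto)
  then obtain x where x: "(T ^^ N) x = x" "\<And>y. (T ^^ N) y = y \<Longrightarrow> y = x"
    by blast
  have "(T ^^ N) (T x) = T ((T ^^ N) x)" by (rule funpow_swap1[symmetric])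
  also have "\<dots> = T x" using x(1) by simp
  finally have "(T ^^ N) (T x) = T x" .
  then have Tx: "T x = x" using x(2) by blast
  define u where "u = apply_bcontfun x"
  have ueq: "u t = x0 + integral {0..t} (\<lambda>r. F r (u r)) - integral {0..t0} (\<lambda>r. F r (u r))" if "t \<in> {0..L}" for t
    using Tapp[of x t] that unfolding Tx u_def \<Phi>_def by (simp add: clp_id)
  have uc: "continuous_on {0..L} u" unfolding u_def by simp
  have "acf L u (\<lambda>t. F t (u t))"
    unfolding acf_def
  proof (intro conjI allI impI)
    fix s t assume st: "0 \<le> s" "s \<le> t" "t \<le> L"
    have A: "integral {0..t} (\<lambda>r. F r (u r)) = integral {0..s} (\<lambda>r. F r (u r)) + integral {s..t} (\<lambda>r. F r (u r))"
      by (rule Henstock_Kurzweil_Integration.integral_combine[symmetric]) (use st gint[OF uc] in auto)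
    have us: "u s = x0 + integral {0..s} (\<lambda>r. F r (u r)) - integral {0..t0} (\<lambda>r. F r (u r))"
      using ueq[of s] st by auto
    have ut: "u t = x0 + (integral {0..s} (\<lambda>r. F r (u r)) + integral {s..t} (\<lambda>r. F r (u r))) - integral {0..t0} (\<lambda>r. F r (u r))"
      using ueq[of t] st A by auto
    have "u t - u s = integral {s..t} (\<lambda>r. F r (u r))"
      unfolding ut us by (simp add: algebra_simps)
    then show "((\<lambda>r. F r (u r)) has_integral (u t - u s)) {s..t}"
      using gint[OF uc st] by (simp add: integrable_integral)
  next
    show "(\<lambda>t. F t (u t)) \<in> borel_measurable (lebesgue_on {0..L})" by (rule meas[OF uc])
    show "\<exists>B. \<forall>t\<in>{0..L}. norm (F t (u t)) \<le> B" by (rule bnd[OF uc])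
  qed
  moreover have "u t0 = x0" using ueq[OF t0] by simp
  ultimately show ?thesis by blast
qed

lemma ode_unique:
  fixes F :: "real \<Rightarrow> 'v::euclidean_space \<Rightarrow> 'v"
  assumes t0: "t0 \<in> {0..L}"
    and lip: "\<And>t x y. t \<in> {0..L} \<Longrightarrow> norm (F t x - F t y) \<le> K * norm (x - y)" and K: "K \<ge> 0"
    and u: "acf L u (\<lambda>t. F t (u t))" and v: "acf L v (\<lambda>t. F t (v t))" and e: "u t0 = v t0"
  shows "\<And>t. t \<in> {0..L} \<Longrightarrow> u t = v t"
proof -
  have "acf L (\<lambda>t. u t - v t) (\<lambda>t. F t (u t) - F t (v t))" by (rule acf_minus[OF u v])
  from gronwall_zero[OF this K _ t0] lip e
  show "\<And>t. t \<in> {0..L} \<Longrightarrow> u t = v t" by auto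
qed

definition varsum :: "(real \<Rightarrow> real) \<Rightarrow> real list \<Rightarrow> real" where
  "varsum g xs = (\<Sum>i<length xs - 1. \<bar>g (xs ! Suc i) - g (xs ! i)\<bar>)"

lemma varsum_snoc:
  "varsum g (xs @ [a]) = varsum g xs + (if xs = [] then 0 else \<bar>g a - g (last xs)\<bar>)"
proof (cases xs rule: rev_cases)
  case Nil then show ?thesis by (simp add: varsum_def)
next
  case (snoc ys b)
  have "varsum g (xs @ [a]) = (\<Sum>i<Suc (length ys). \<bar>g ((xs @ [a]) ! Suc i) - g ((xs @ [a]) ! i)\<bar>)"
    unfolding varsum_def snoc by simp
  also have "\<dots> = (\<Sum>i<length ys. \<bar>g ((xs @ [a]) ! Suc i) - g ((xs @ [a]) ! i)\<bar>) + \<bar>g a - g b\<bar>"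
    by (simp add: snoc nth_append)
  also have "(\<Sum>i<length ys. \<bar>g ((xs @ [a]) ! Suc i) - g ((xs @ [a]) ! i)\<bar>) = varsum g xs"
    unfolding varsum_def snoc by (intro sum.cong) (auto simp: nth_append)
  finally show ?thesis using snoc by simp
qed

lemma varsum_nonneg: "varsum g xs \<ge> 0"
  unfolding varsum_def by (intro sum_nonneg) auto

lemma bv_measurable:
  fixes \<beta> :: "real \<Rightarrow> real"
  assumes bv: "bounded_variation_on \<beta> 0 L"
  shows "\<beta> \<in> borel_measurable (lebesgue_on {0..L})"
proof -
  obtain M where M: "\<And>xs. sorted xs \<Longrightarrow> set xs \<subseteq> {0..L} \<Longrightarrow> varsum \<beta> xs \<le> M"
    using bv unfolding bounded_variation_on_def varsum_def by blast
  define S where "S = (\<lambda>x. {varsum \<beta> xs | xs. sorted xs \<and> set xs \<subseteq> {0..x}})"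
  define V where "V = (\<lambda>x. Sup (S x))"
  have ne: "S x \<noteq> {}" for x unfolding S_def by (auto intro: exI[of _ "[]"])
  have bdd: "bdd_above (S x)" if "x \<le> L" for x
  proof (rule bdd_aboveI[of _ M])
    fix z assume "z \<in> S x"
    then obtain xs where "z = varsum \<beta> xs" "sorted xs" "set xs \<subseteq> {0..x}" unfolding S_def by blast
    moreover have "{0..x} \<subseteq> {0..L}" using that by auto
    ultimately show "z \<le> M" using M by blast
  qed
  have key: "V x + \<bar>\<beta> y - \<beta> x\<bar> \<le> V y" if xy: "0 \<le> x" "x \<le> y" "y \<le> L" for x y
  proof -
    have "z \<le> V y - \<bar>\<beta> y - \<beta> x\<bar>" if "z \<in> S x" for z
    proof -
      obtain xs where xs: "z = varsum \<beta> xs" "sorted xs" "set xs \<subseteq> {0..x}" using \<open>z \<in> S x\<close> unfolding S_def by blast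
      have "varsum \<beta> (xs @ [x, y]) = varsum \<beta> ((xs @ [x]) @ [y])" by simp
      also have "\<dots> = varsum \<beta> (xs @ [x]) + \<bar>\<beta> y - \<beta> x\<bar>" by (subst varsum_snoc) simp
      finally have e: "varsum \<beta> (xs @ [x, y]) = varsum \<beta> (xs @ [x]) + \<bar>\<beta> y - \<beta> x\<bar>" .
      have g: "varsum \<beta> (xs @ [x]) \<ge> varsum \<beta> xs" by (subst varsum_snoc) simp
      have le: "z + \<bar>\<beta> y - \<beta> x\<bar> \<le> varsum \<beta> (xs @ [x, y])" using xs e g by linarith
      have "sorted (xs @ [x, y])" using xs xy by (auto simp: sorted_append)
      moreover have "set (xs @ [x, y]) \<subseteq> {0..y}" using xs xy by auto
      ultimately have "varsum \<beta> (xs @ [x, y]) \<in> S y" unfolding S_def by blast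
      then have "varsum \<beta> (xs @ [x, y]) \<le> V y" unfolding V_def by (rule cSup_upper) (rule bdd, fact)
      with le show ?thesis by simp
    qed
    then have "V x \<le> V y - \<bar>\<beta> y - \<beta> x\<bar>" unfolding V_def using ne by (intro cSup_least) auto
    then show ?thesis by simp
  qed
  have m1: "mono_on {0..L} V"
  proof (rule mono_onI)
    fix x y assume "x \<in> {0..L}" "y \<in> {0..L}" "x \<le> y"
    then have "V x + \<bar>\<beta> y - \<beta> x\<bar> \<le> V y" using key by auto
    then show "V x \<le> V y" by linarith
  qed
  have m2: "mono_on {0..L} (\<lambda>t. V t - \<beta> t)"
  proof (rule mono_onI)
    fix x y assume "x \<in> {0..L}" "y \<in> {0..L}" "x \<le> y"
    then have "V x + \<bar>\<beta> y - \<beta> x\<bar> \<le> V y" using key by auto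
    then show "V x - \<beta> x \<le> V y - \<beta> y" by linarith
  qed
  have meas: "f \<in> borel_measurable (lebesgue_on {0..L})" if "mono_on {0..L} f" for f :: "real \<Rightarrow> real"
  proof -
    have sub: "sets (restrict_space borel {0..L}) \<subseteq> sets (restrict_space lebesgue {0..L})"
      by (rule mono_restrict_space) force
    show ?thesis
      by (rule borel_measurable_subalgebra[OF sub _ borel_measurable_mono_on_fnc[OF that]]) simp
  qed
  have "(\<lambda>t. V t - (V t - \<beta> t)) \<in> borel_measurable (lebesgue_on {0..L})"
    by (rule borel_measurable_diff[OF meas[OF m1] meas[OF m2]])
  then show ?thesis by simp
qed

definition rad :: "real \<Rightarrow> 'a::euclidean_space \<Rightarrow> 'a" where
  "rad R x = closest_point (cball 0 R) x"

lemma rad_id: "norm x \<le> R \<Longrightarrow> rad R x = x"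
  unfolding rad_def by (rule closest_point_self) simp

lemma rad_norm: "R \<ge> 0 \<Longrightarrow> norm (rad R x) \<le> R"
  unfolding rad_def using closest_point_in_set[of "cball (0::'a) R" x] by auto

lemma rad_lip: "R \<ge> 0 \<Longrightarrow> norm (rad R x - rad R y) \<le> norm (x - y)"
  unfolding rad_def using closest_point_lipschitz[of "cball (0::'a) R" x y] by (auto simp: dist_norm)

lemma rad_scale:
  fixes x :: "'a::euclidean_space"
  assumes R: "R > 0"
  shows "\<exists>s. 0 < s \<and> s \<le> 1 \<and> rad R x = s *\<^sub>R x \<and> (norm x \<le> R \<longrightarrow> s = 1) \<and> (norm x > R \<longrightarrow> s * norm x = R)"
proof (cases "norm x \<le> R")
  case True then show ?thesis by (intro exI[of _ 1]) (auto simp: rad_id)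
next
  case False
  then have nx: "norm x > R" "norm x > 0" using R by auto
  define p where "p = (R / norm x) *\<^sub>R x"
  have np: "norm p = R" unfolding p_def using nx R by simp
  have "p = closest_point (cball 0 R) x"
  proof (rule closest_point_unique)
    show "p \<in> cball 0 R" using np by simp
    show "\<forall>z\<in>cball 0 R. dist x p \<le> dist x z"
    proof
      fix z :: 'a assume z: "z \<in> cball 0 R"
      have "x - p = (1 - R / norm x) *\<^sub>R x" unfolding p_def by (simp add: algebra_simps)
      then have "dist x p = (1 - R / norm x) * norm x" using nx R by (simp add: dist_norm)
      also have "\<dots> = norm x - R" using nx by (simp add: field_simps)
      also have "\<dots> \<le> norm x - norm z" using z by simp
      also have "\<dots> \<le> dist x z" by (simp add: dist_norm norm_triangle_ineq2)
      finally show "dist x p \<le> dist x z" .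
    qed
  qed auto
  then have "rad R x = p" by (simp add: rad_def)
  then show ?thesis using nx R unfolding p_def by (intro exI[of _ "R / norm x"]) auto
qed

lemma proj_perp_prop:
  fixes V W x :: "'a::euclidean_space"
  shows "x - proj_perp V W x \<in> span {V, W} \<and> (\<forall>z\<in>span {V, W}. orthogonal (proj_perp V W x) z)"
proof -
  obtain y z where yz: "y \<in> span {V, W}" "\<And>w. w \<in> span {V, W} \<Longrightarrow> orthogonal z w" "x = y + z"
    using orthogonal_subspace_decomp_exists by blast
  have ex: "\<exists>!p. x - p \<in> span {V, W} \<and> (\<forall>w\<in>span {V, W}. orthogonal p w)"
  proof (rule ex1I[of _ z])
    show "x - z \<in> span {V, W} \<and> (\<forall>w\<in>span {V, W}. orthogonal z w)" using yz by auto
    fix p assume p: "x - p \<in> span {V, W} \<and> (\<forall>w\<in>span {V, W}. orthogonal p w)"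
    have d: "z - p \<in> span {V, W}"
    proof -
      have "(x - p) - y \<in> span {V, W}" by (rule span_diff) (use p yz in auto)
      moreover have "(x - p) - y = z - p" using yz by (simp add: algebra_simps)
      ultimately show ?thesis by simp
    qed
    have "orthogonal (z - p) (z - p)"
      using yz(2)[OF d] p d by (simp add: orthogonal_def inner_diff_left)
    then show "p = z" by (simp add: orthogonal_def)
  qed
  show ?thesis unfolding proj_perp_def using theI'[OF ex] .
qed

lemma proj_perp_eq:
  fixes V W x y :: "'a::euclidean_space"
  assumes "x - y \<in> span {V, W}" "\<And>z. z \<in> span {V, W} \<Longrightarrow> orthogonal y z"
  shows "proj_perp V W x = y"
proof -
  define p where "p = proj_perp V W x"
  have p: "x - p \<in> span {V, W}" "\<And>z. z \<in> span {V, W} \<Longrightarrow> orthogonal p z"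
    using proj_perp_prop[of x V W] unfolding p_def by auto
  have d: "y - p \<in> span {V, W}"
  proof -
    have "(x - p) - (x - y) \<in> span {V, W}" by (rule span_diff) (use p assms in auto)
    moreover have "(x - p) - (x - y) = y - p" by (simp add: algebra_simps)
    ultimately show ?thesis by simp
  qed
  have "orthogonal (y - p) (y - p)"
    using assms(2)[OF d] p(2)[OF d] by (simp add: orthogonal_def inner_diff_left)
  then show ?thesis unfolding p_def[symmetric] by (simp add: orthogonal_def)
qed

lemma proj_perp_norm:
  fixes V W x :: "'a::euclidean_space"
  shows "norm (proj_perp V W x) \<le> norm x"
proof -
  define p where "p = proj_perp V W x"
  have p: "x - p \<in> span {V, W}" "\<And>z. z \<in> span {V, W} \<Longrightarrow> orthogonal p z"
    using proj_perp_prop[of x V W] unfolding p_def by auto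
  have o: "inner p (x - p) = 0" using p by (simp add: orthogonal_def)
  have "(norm x)\<^sup>2 = (norm p)\<^sup>2 + (norm (x - p))\<^sup>2"
  proof -
    have o': "inner p x = inner p p" using o by (simp add: inner_diff_right)
    show ?thesis by (simp add: power2_norm_eq_inner inner_diff_left inner_diff_right inner_commute o')
  qed
  then have "(norm p)\<^sup>2 \<le> (norm x)\<^sup>2" by simp
  then show ?thesis unfolding p_def by (simp add: power2_le_iff_abs_le)
qed

lemma proj_perp_orth_D:
  fixes V W x :: "'a::euclidean_space"
  shows "inner (proj_perp V W x) W = 0" "inner (proj_perp V W x) V = 0"
proof -
  have "V \<in> span {V, W}" "W \<in> span {V, W}" by (simp_all add: span_base)
  then show "inner (proj_perp V W x) W = 0" "inner (proj_perp V W x) V = 0"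
    using proj_perp_prop[of x V W] unfolding orthogonal_def by blast+
qed

lemma proj_perp_formula:
  fixes tau D lam :: "'a::euclidean_space"
  assumes "inner tau tau = 1" "inner tau D = 0" "inner D D = c\<^sup>2" "c > 0"
  shows "proj_perp tau D lam = lam - inner lam tau *\<^sub>R tau - (inner lam D / c\<^sup>2) *\<^sub>R D"
proof (rule proj_perp_eq)
  show "lam - (lam - inner lam tau *\<^sub>R tau - (inner lam D / c\<^sup>2) *\<^sub>R D) \<in> span {tau, D}"
  proof -
    have B: "lam - (lam - inner lam tau *\<^sub>R tau - (inner lam D / c\<^sup>2) *\<^sub>R D) = inner lam tau *\<^sub>R tau + (inner lam D / c\<^sup>2) *\<^sub>R D"
      by (simp add: algebra_simps)
    show ?thesis unfolding B by (intro span_add span_mul span_base) auto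
  qed
  fix z assume z: "z \<in> span {tau, D}"
  show "orthogonal (lam - inner lam tau *\<^sub>R tau - (inner lam D / c\<^sup>2) *\<^sub>R D) z"
  proof (rule orthogonal_to_span[OF z])
    fix y assume "y \<in> {tau, D}"
    then consider "y = tau" | "y = D" by blast
    then show "orthogonal (lam - inner lam tau *\<^sub>R tau - (inner lam D / c\<^sup>2) *\<^sub>R D) y"
    proof cases
      case 1
      have "inner D tau = 0" using assms(2) by (simp add: inner_commute)
      then show ?thesis using 1 assms(1) by (simp add: orthogonal_def inner_diff_left inner_commute[of tau lam])
    next
      case 2
      have "inner D tau = 0" using assms(2) by (simp add: inner_commute)
      moreover have "c\<^sup>2 \<noteq> 0" using assms(4) by simp
      ultimately show ?thesis using 2 assms(2,3) by (simp add: orthogonal_def inner_diff_left inner_commute[of D lam] power2_eq_square)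
    qed
  qed
qed

definition lb :: "('v::real_normed_vector \<Rightarrow> 'w::real_normed_vector) \<Rightarrow> bool" where
  "lb f \<longleftrightarrow> (\<exists>M. \<forall>x. norm (f x) \<le> M) \<and> (\<exists>K. \<forall>x y. norm (f x - f y) \<le> K * norm (x - y))"

lemma lbE:
  assumes "lb f"
  obtains M K where "M \<ge> 0" "K \<ge> 0" "\<And>x. norm (f x) \<le> M" "\<And>x y. norm (f x - f y) \<le> K * norm (x - y)"
proof -
  from assms obtain M K where M: "\<And>x. norm (f x) \<le> M" and K: "\<And>x y. norm (f x - f y) \<le> K * norm (x - y)"
    unfolding lb_def by blast
  have "norm (f x) \<le> max M 0" for x using M[of x] by (simp add: le_max_iff_disj)
  moreover have "norm (f x - f y) \<le> max K 0 * norm (x - y)" for x y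
    using K[of x y] by (meson max.cobounded1 mult_right_mono norm_ge_zero order_trans)
  ultimately show ?thesis using that[of "max M 0" "max K 0"] by auto
qed

lemma lb_const[simp]: "lb (\<lambda>x. c)"
  unfolding lb_def by (auto intro: exI[of _ "norm c"] exI[of _ 0])

lemma lb_add:
  assumes "lb f" "lb g" shows "lb (\<lambda>x. f x + g x)"
proof -
  obtain M K where f: "\<And>x. norm (f x) \<le> M" "\<And>x y. norm (f x - f y) \<le> K * norm (x - y)" using lbE[OF assms(1)] by metis
  obtain M' K' where g: "\<And>x. norm (g x) \<le> M'" "\<And>x y. norm (g x - g y) \<le> K' * norm (x - y)" using lbE[OF assms(2)] by metis
  have "norm (f x + g x) \<le> M + M'" for x using f g by (meson add_mono norm_triangle_ineq order_trans)
  moreover have "norm ((f x + g x) - (f y + g y)) \<le> (K + K') * norm (x - y)" for x y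
  proof -
    have "norm ((f x + g x) - (f y + g y)) \<le> norm (f x - f y) + norm (g x - g y)"
      by (metis add_diff_add norm_triangle_ineq)
    also have "\<dots> \<le> (K + K') * norm (x - y)" using f g by (simp add: add_mono distrib_right)
    finally show ?thesis .
  qed
  ultimately show ?thesis unfolding lb_def by blast
qed

lemma lb_scale_const:
  assumes "lb f" shows "lb (\<lambda>x. a *\<^sub>R f x)"
proof -
  obtain M K where f: "\<And>x. norm (f x) \<le> M" "\<And>x y. norm (f x - f y) \<le> K * norm (x - y)" using lbE[OF assms(1)] by metis
  have "norm (a *\<^sub>R f x) \<le> \<bar>a\<bar> * M" for x using f by (simp add: mult_left_mono)
  moreover have "norm (a *\<^sub>R f x - a *\<^sub>R f y) \<le> (\<bar>a\<bar> * K) * norm (x - y)" for x y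
    using f(2)[of x y] by (simp add: scaleR_diff_right[symmetric] mult.assoc mult_left_mono del: scaleR_diff_right)
  ultimately show ?thesis unfolding lb_def by blast
qed

lemma lb_diff:
  assumes "lb f" "lb g" shows "lb (\<lambda>x. f x - g x)"
  using lb_add[OF assms(1) lb_scale_const[OF assms(2), of "-1"]] by simp

lemma lb_bilinear:
  assumes bb: "bounded_bilinear h" and "lb f" "lb g"
  shows "lb (\<lambda>x. h (f x) (g x))"
proof -
  interpret bounded_bilinear h by fact
  obtain Kh where Kh: "Kh > 0" "\<And>a b. norm (h a b) \<le> norm a * norm b * Kh" using pos_bounded by blast
  obtain M K where f: "M \<ge> 0" "K \<ge> 0" "\<And>x. norm (f x) \<le> M" "\<And>x y. norm (f x - f y) \<le> K * norm (x - y)" using lbE[OF assms(2)] by metis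
  obtain M' K' where g: "M' \<ge> 0" "K' \<ge> 0" "\<And>x. norm (g x) \<le> M'" "\<And>x y. norm (g x - g y) \<le> K' * norm (x - y)" using lbE[OF assms(3)] by metis
  have "norm (h (f x) (g x)) \<le> M * M' * Kh" for x
  proof -
    have "norm (f x) * norm (g x) \<le> M * M'" using f g by (intro mult_mono) auto
    then have "norm (f x) * norm (g x) * Kh \<le> M * M' * Kh" using Kh(1) by (intro mult_right_mono) auto
    then show ?thesis using Kh(2)[of "f x" "g x"] by linarith
  qed
  moreover have "norm (h (f x) (g x) - h (f y) (g y)) \<le> (Kh * (K * M' + M * K')) * norm (x - y)" for x y
  proof -
    have e: "h (f x) (g x) - h (f y) (g y) = h (f x - f y) (g x) + h (f y) (g x - g y)"
      by (simp add: diff_left diff_right)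
    have "norm (h (f x) (g x) - h (f y) (g y)) \<le> norm (h (f x - f y) (g x)) + norm (h (f y) (g x - g y))"
      unfolding e by (rule norm_triangle_ineq)
    also have "\<dots> \<le> norm (f x - f y) * norm (g x) * Kh + norm (f y) * norm (g x - g y) * Kh"
      by (intro add_mono Kh)
    also have "\<dots> \<le> (K * norm (x - y)) * M' * Kh + M * (K' * norm (x - y)) * Kh"
      using f g Kh(1) by (intro add_mono mult_right_mono mult_mono) auto
    also have "\<dots> = (Kh * (K * M' + M * K')) * norm (x - y)" by (simp add: algebra_simps)
    finally show ?thesis .
  qed
  ultimately show ?thesis unfolding lb_def by blast
qed

lemma lb_inner:
  fixes f g :: "'v::real_normed_vector \<Rightarrow> 'w::real_inner"
  assumes "lb f" "lb g" shows "lb (\<lambda>x. inner (f x) (g x))"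
  using lb_bilinear[OF bounded_bilinear_inner assms] .

lemma lb_mult:
  fixes f g :: "'v::real_normed_vector \<Rightarrow> real"
  assumes "lb f" "lb g" shows "lb (\<lambda>x. f x * g x)"
  using lb_bilinear[OF bounded_bilinear_mult assms] .

lemma lb_scaleR:
  fixes f :: "'v::real_normed_vector \<Rightarrow> real"
  assumes "lb f" "lb g" shows "lb (\<lambda>x. f x *\<^sub>R g x)"
  using lb_bilinear[OF bounded_bilinear_scaleR assms] .

lemma lb_pair:
  assumes "lb f" "lb g" shows "lb (\<lambda>x. (f x, g x))"
proof -
  obtain M K where f: "\<And>x. norm (f x) \<le> M" "\<And>x y. norm (f x - f y) \<le> K * norm (x - y)" using lbE[OF assms(1)] by metis
  obtain M' K' where g: "\<And>x. norm (g x) \<le> M'" "\<And>x y. norm (g x - g y) \<le> K' * norm (x - y)" using lbE[OF assms(2)] by metis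
  have "norm (f x, g x) \<le> M + M'" for x using f g norm_Pair_le by (meson add_mono order_trans)
  moreover have "norm ((f x, g x) - (f y, g y)) \<le> (K + K') * norm (x - y)" for x y
  proof -
    have "norm ((f x, g x) - (f y, g y)) = norm (f x - f y, g x - g y)" by simp
    also have "\<dots> \<le> norm (f x - f y) + norm (g x - g y)" by (rule norm_Pair_le)
    also have "\<dots> \<le> (K + K') * norm (x - y)" using f g by (simp add: add_mono distrib_right)
    finally show ?thesis .
  qed
  ultimately show ?thesis unfolding lb_def by blast
qed

lemma lb_rad:
  fixes l :: "'v::real_normed_vector \<Rightarrow> 'a::euclidean_space"
  assumes "bounded_linear l" "R \<ge> 0"
  shows "lb (\<lambda>x. rad R (l x))"
proof -
  interpret bounded_linear l by fact
  obtain K where K: "\<And>x. norm (l x) \<le> norm x * K" "K \<ge> 0" using nonneg_bounded by blast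
  have "norm (rad R (l x)) \<le> R" for x using rad_norm[OF assms(2)] .
  moreover have "norm (rad R (l x) - rad R (l y)) \<le> K * norm (x - y)" for x y
  proof -
    have "norm (rad R (l x) - rad R (l y)) \<le> norm (l x - l y)" by (rule rad_lip[OF assms(2)])
    also have "\<dots> = norm (l (x - y))" by (simp add: diff)
    also have "\<dots> \<le> K * norm (x - y)" using K(1)[of "x - y"] by (simp add: mult.commute)
    finally show ?thesis .
  qed
  ultimately show ?thesis unfolding lb_def by blast
qed

lemma lb_clamp:
  fixes l :: "'v::real_normed_vector \<Rightarrow> real"
  assumes "bounded_linear l" "F \<ge> 0"
  shows "lb (\<lambda>x. max (-F) (min F (l x)))"
proof -
  interpret bounded_linear l by fact
  obtain K where K: "\<And>x. norm (l x) \<le> norm x * K" "K \<ge> 0" using nonneg_bounded by blast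
  have "norm (max (-F) (min F (l x))) \<le> F" for x using assms(2) by auto
  moreover have "norm (max (-F) (min F (l x)) - max (-F) (min F (l y))) \<le> K * norm (x - y)" for x y
  proof -
    have "norm (max (-F) (min F (l x)) - max (-F) (min F (l y))) \<le> norm (l x - l y)"
      unfolding real_norm_def by (cases "l x \<le> l y"; auto simp: max_def min_def)
    also have "\<dots> = norm (l (x - y))" by (simp add: diff)
    also have "\<dots> \<le> K * norm (x - y)" using K(1)[of "x - y"] by (simp add: mult.commute)
    finally show ?thesis .
  qed
  ultimately show ?thesis unfolding lb_def by blast
qed

lemma lb_linear:
  fixes l :: "'v::real_normed_vector \<Rightarrow> 'w::real_normed_vector"
  assumes "bounded_linear l"
  shows "\<exists>K\<ge>0. \<forall>x y. norm (l x - l y) \<le> K * norm (x - y)"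
proof -
  interpret bounded_linear l by fact
  obtain K where K: "\<And>x. norm (l x) \<le> norm x * K" "K \<ge> 0" using nonneg_bounded by blast
  show ?thesis using K by (intro exI[of _ K]) (auto simp: diff[symmetric] mult.commute)
qed

lemma lb_cont:
  assumes "lb f" shows "continuous_on UNIV f"
proof -
  obtain M K where "\<And>x y. norm (f x - f y) \<le> K * norm (x - y)" "K \<ge> 0" using lbE[OF assms] by metis
  then have "K-lipschitz_on UNIV f" by (intro lipschitz_onI) (auto simp: dist_norm)
  then show ?thesis by (rule lipschitz_on_continuous_on)
qed

lemma lb_divide_const:
  fixes f :: "'v::real_normed_vector \<Rightarrow> real"
  assumes "lb f" shows "lb (\<lambda>x. f x / a)"
  using lb_mult[OF assms lb_const[of "1/a"]] by simp

locale Setup =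
  fixes \<beta> :: "real \<Rightarrow> real" and L Mb f0 t0 :: real and lam \<tau>0 \<tau>1 :: "'a::euclidean_space"
  assumes L: "L > 0" and \<beta>m: "\<beta> \<in> borel_measurable (lebesgue_on {0..L})"
    and Mb: "Mb > 0" and \<beta>b: "\<And>t. t \<in> {0..L} \<Longrightarrow> \<bar>\<beta> t\<bar> \<le> Mb"
    and lam: "norm lam = 1" and \<tau>0: "norm \<tau>0 = 1" and orth: "inner \<tau>0 \<tau>1 = 0"
    and f0: "f0 > 0" and t0: "t0 \<in> {0..L}"
    and indep: "\<forall>a b c::real. a *\<^sub>R \<tau>0 + b *\<^sub>R \<tau>1 + c *\<^sub>R lam = 0 \<longrightarrow> a = 0 \<and> b = 0 \<and> c = 0"
begin

definition "c = norm \<tau>1"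
definition Pf :: "'a \<Rightarrow> 'a \<Rightarrow> 'a" where "Pf a d = lam - (inner lam a) *\<^sub>R a - (inner lam d / c\<^sup>2) *\<^sub>R d"
definition "\<pi>0 = 1 - (inner lam \<tau>0)\<^sup>2 - (inner lam \<tau>1)\<^sup>2 / c\<^sup>2"
definition "k2 = f0\<^sup>2 * \<pi>0"
definition "Fm = f0 + Mb * c * L + 1"
definition clF :: "real \<Rightarrow> real" where "clF y = max (-Fm) (min Fm y)"
definition Pst :: "'a \<times> 'a \<times> real \<Rightarrow> 'a" where "Pst x = Pf (rad 1 (fst x)) (rad c (fst (snd x)))"
definition Bfun :: "'a \<times> 'a \<times> real \<Rightarrow> 'a \<times> 'a \<times> real" where "Bfun x = (0::'a, (c\<^sup>2 * clF (snd (snd x)) * inner (Pst x) (Pst x) / k2) *\<^sub>R Pst x, inner lam (rad c (fst (snd x))))"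
definition Afun :: "'a \<times> 'a \<times> real \<Rightarrow> 'a \<times> 'a \<times> real" where "Afun x = (fst (snd x), - (c\<^sup>2) *\<^sub>R fst x, 0::real)"
definition Fld :: "real \<Rightarrow> 'a \<times> 'a \<times> real \<Rightarrow> 'a \<times> 'a \<times> real" where "Fld t x = Afun x + \<beta> t *\<^sub>R Bfun x"

lemma c_pos: "c > 0"
proof -
  have "\<tau>1 \<noteq> 0" using indep[rule_format, of 0 1 0] by auto
  then show ?thesis unfolding c_def by simp
qed

lemma Pf_sq:
  assumes "inner a a = 1" "inner a d = 0" "inner d d = c\<^sup>2"
  shows "inner (Pf a d) (Pf a d) = 1 - (inner lam a)\<^sup>2 - (inner lam d)\<^sup>2 / c\<^sup>2"
    and "inner lam (Pf a d) = 1 - (inner lam a)\<^sup>2 - (inner lam d)\<^sup>2 / c\<^sup>2"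
proof -
  have ll: "inner lam lam = 1" using lam by (simp add: power2_norm_eq_inner[symmetric])
  have c2: "c\<^sup>2 \<noteq> 0" using c_pos by simp
  have da: "inner d a = 0" using assms(2) by (simp add: inner_commute)
  show "inner lam (Pf a d) = 1 - (inner lam a)\<^sup>2 - (inner lam d)\<^sup>2 / c\<^sup>2"
    unfolding Pf_def using ll by (simp add: inner_diff_right power2_eq_square divide_simps)
  show "inner (Pf a d) (Pf a d) = 1 - (inner lam a)\<^sup>2 - (inner lam d)\<^sup>2 / c\<^sup>2"
  proof -
    have gen: "inner (l - X - Y) (l - X - Y) = inner l l + inner X X + inner Y Y - 2 * inner l X - 2 * inner l Y + 2 * inner X Y"
      for l X Y :: 'a by (simp add: inner_diff_left inner_diff_right inner_commute algebra_simps)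
    have "inner (Pf a d) (Pf a d) = 1 + (inner lam a)\<^sup>2 + (inner lam d / c\<^sup>2)\<^sup>2 * c\<^sup>2
        - 2 * (inner lam a)\<^sup>2 - 2 * ((inner lam d)\<^sup>2 / c\<^sup>2) + 0"
      unfolding Pf_def gen using ll assms by (simp add: power2_eq_square)
    also have "\<dots> = 1 - (inner lam a)\<^sup>2 - (inner lam d)\<^sup>2 / c\<^sup>2"
      using c2 by (simp add: field_simps power2_eq_square)
    finally show ?thesis .
  qed
qed

lemma \<pi>0_pos: "\<pi>0 > 0"
proof -
  have t0t0: "inner \<tau>0 \<tau>0 = 1" using \<tau>0 by (simp add: power2_norm_eq_inner[symmetric])
  have t1t1: "inner \<tau>1 \<tau>1 = c\<^sup>2" unfolding c_def by (simp add: power2_norm_eq_inner)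
  have eq: "\<pi>0 = inner (Pf \<tau>0 \<tau>1) (Pf \<tau>0 \<tau>1)" unfolding \<pi>0_def using Pf_sq(1)[OF t0t0 orth t1t1] by simp
  have "Pf \<tau>0 \<tau>1 \<noteq> 0"
  proof
    assume "Pf \<tau>0 \<tau>1 = 0"
    then have "(- inner lam \<tau>0) *\<^sub>R \<tau>0 + (- (inner lam \<tau>1 / c\<^sup>2)) *\<^sub>R \<tau>1 + 1 *\<^sub>R lam = 0"
      unfolding Pf_def by (simp add: algebra_simps)
    then show False using indep[rule_format, of "- inner lam \<tau>0" "- (inner lam \<tau>1 / c\<^sup>2)" 1] by simp
  qed
  then show ?thesis unfolding eq by simp
qed

lemma k2_pos: "k2 > 0" unfolding k2_def using f0 \<pi>0_pos by simp

lemma Fm_pos: "Fm > 0" unfolding Fm_def using f0 Mb c_pos L by (simp add: add_pos_nonneg)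

lemma lb_fst: "bounded_linear (fst :: 'a \<times> 'a \<times> real \<Rightarrow> 'a)" by (rule bounded_linear_fst)
lemma lb_fsnd: "bounded_linear (\<lambda>x::'a \<times> 'a \<times> real. fst (snd x))"
  using bounded_linear_compose[OF bounded_linear_fst bounded_linear_snd] by (simp add: o_def)
lemma lb_ssnd: "bounded_linear (\<lambda>x::'a \<times> 'a \<times> real. snd (snd x))"
  using bounded_linear_compose[OF bounded_linear_snd bounded_linear_snd] by (simp add: o_def)

lemma lb_Pst: "lb Pst"
proof -
  have r1: "lb (\<lambda>x::'a \<times> 'a \<times> real. rad 1 (fst x))" by (rule lb_rad[OF lb_fst]) simp
  have r2: "lb (\<lambda>x::'a \<times> 'a \<times> real. rad c (fst (snd x)))" by (rule lb_rad[OF lb_fsnd]) (use c_pos in simp)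
  show ?thesis unfolding Pst_def Pf_def
    by (intro lb_diff lb_scaleR lb_inner lb_divide_const lb_const r1 r2)
qed

lemma lb_Bfun: "lb Bfun"
proof -
  have r2: "lb (\<lambda>x::'a \<times> 'a \<times> real. rad c (fst (snd x)))" by (rule lb_rad[OF lb_fsnd]) (use c_pos in simp)
  have cf: "lb (\<lambda>x::'a \<times> 'a \<times> real. clF (snd (snd x)))" unfolding clF_def
    by (rule lb_clamp[OF lb_ssnd]) (use Fm_pos in simp)
  show ?thesis unfolding Bfun_def
    by (intro lb_pair lb_const lb_scaleR lb_divide_const lb_mult lb_inner lb_Pst cf r2)
qed

lemma Afun_linear: "bounded_linear Afun"
  unfolding Afun_def
  by (intro bounded_linear_Pair bounded_linear_zero lb_fsnd bounded_linear_compose[OF bounded_linear_scaleR_right bounded_linear_fst])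

lemma Fld_lip: "\<exists>K\<ge>0. \<forall>t\<in>{0..L}. \<forall>x y. norm (Fld t x - Fld t y) \<le> K * norm (x - y)"
proof -
  obtain KA where KA: "KA \<ge> 0" "\<And>x y. norm (Afun x - Afun y) \<le> KA * norm (x - y)"
    using lb_linear[OF Afun_linear] by blast
  obtain MB KB where KB: "KB \<ge> 0" "\<And>x y. norm (Bfun x - Bfun y) \<le> KB * norm (x - y)"
    using lbE[OF lb_Bfun] by metis
  have "norm (Fld t x - Fld t y) \<le> (KA + Mb * KB) * norm (x - y)" if t: "t \<in> {0..L}" for t x y
  proof -
    have "Fld t x - Fld t y = (Afun x - Afun y) + \<beta> t *\<^sub>R (Bfun x - Bfun y)"
      unfolding Fld_def by (simp add: algebra_simps)
    then have "norm (Fld t x - Fld t y) \<le> norm (Afun x - Afun y) + \<bar>\<beta> t\<bar> * norm (Bfun x - Bfun y)"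
      by (metis norm_scaleR norm_triangle_ineq)
    also have "\<dots> \<le> KA * norm (x - y) + Mb * (KB * norm (x - y))"
      using KA KB \<beta>b[OF t] by (intro add_mono mult_mono) auto
    finally show ?thesis by (simp add: algebra_simps)
  qed
  then show ?thesis using KA KB Mb by (intro exI[of _ "KA + Mb * KB"]) auto
qed

lemma Fld_meas:
  assumes "continuous_on {0..L} u"
  shows "(\<lambda>t. Fld t (u t)) \<in> borel_measurable (lebesgue_on {0..L})"
proof -
  have ca: "continuous_on {0..L} (\<lambda>t. Afun (u t))"
    by (rule continuous_on_compose2[OF linear_continuous_on[OF Afun_linear] assms]) auto
  have cb: "continuous_on {0..L} (\<lambda>t. Bfun (u t))"
    by (rule continuous_on_compose2[OF lb_cont[OF lb_Bfun] assms]) auto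
  show ?thesis unfolding Fld_def
    by (intro borel_measurable_add borel_measurable_scaleR \<beta>m cont_meas ca cb)
qed

lemma Fld_bnd:
  assumes "continuous_on {0..L} u"
  shows "\<exists>B. \<forall>t\<in>{0..L}. norm (Fld t (u t)) \<le> B"
proof -
  obtain Mu where Mu: "\<And>t. t \<in> {0..L} \<Longrightarrow> norm (u t) \<le> Mu" using cont_bounded[OF assms] by metis
  obtain KA where KA: "KA \<ge> 0" "\<And>x y. norm (Afun x - Afun y) \<le> KA * norm (x - y)"
    using lb_linear[OF Afun_linear] by blast
  obtain MB KB where MB: "MB \<ge> 0" "\<And>x. norm (Bfun x) \<le> MB"
    using lbE[OF lb_Bfun] by metis
  have A0: "Afun 0 = 0" using Afun_linear by (simp add: linear_simps)
  have "norm (Fld t (u t)) \<le> KA * Mu + Mb * MB" if t: "t \<in> {0..L}" for t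
  proof -
    have "norm (Afun (u t)) \<le> KA * Mu" using KA(2)[of "u t" 0] A0 Mu[OF t] KA(1) by (simp add: mult_left_mono order_trans)
    moreover have "norm (\<beta> t *\<^sub>R Bfun (u t)) \<le> Mb * MB" using \<beta>b[OF t] MB by (simp add: mult_mono)
    ultimately show ?thesis unfolding Fld_def by (meson add_mono norm_triangle_ineq order_trans)
  qed
  then show ?thesis by blast
qed

lemma sol_exists: "\<exists>u. acf L u (\<lambda>t. Fld t (u t)) \<and> u t0 = (\<tau>0, \<tau>1, f0)"
proof -
  obtain K where K: "K \<ge> 0" "\<forall>t\<in>{0..L}. \<forall>x y. norm (Fld t x - Fld t y) \<le> K * norm (x - y)"
    using Fld_lip by blast
  show ?thesis
    by (rule ode_exists[OF L t0 Fld_meas Fld_bnd _ K(1)]) (use K in auto)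
qed

lemma sol_unique:
  assumes "acf L u (\<lambda>t. Fld t (u t))" "acf L v (\<lambda>t. Fld t (v t))" "u t0 = v t0" "t \<in> {0..L}"
  shows "u t = v t"
proof -
  obtain K where K: "K \<ge> 0" "\<forall>t\<in>{0..L}. \<forall>x y. norm (Fld t x - Fld t y) \<le> K * norm (x - y)"
    using Fld_lip by blast
  show ?thesis by (rule ode_unique[OF t0 _ K(1) assms]) (use K in auto)
qed

end

context Setup begin

lemma ll: "inner lam lam = 1" using lam by (simp add: power2_norm_eq_inner[symmetric])

lemma lam_inner_le: "\<bar>inner lam v\<bar> \<le> norm v"
  using Cauchy_Schwarz_ineq2[of lam v] lam by simp

lemma TP_bound:
  fixes T D :: 'a
  shows "\<bar>inner T (Pf (rad 1 T) (rad c D))\<bar> \<le> norm T * \<bar>inner T T - 1\<bar> + \<bar>inner T D\<bar> / c"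
proof -
  obtain s1 where s1: "0 < s1" "s1 \<le> 1" "rad 1 T = s1 *\<^sub>R T" "norm T \<le> 1 \<longrightarrow> s1 = 1" "norm T > 1 \<longrightarrow> s1 * norm T = 1"
    using rad_scale[of 1 T] by auto
  obtain s2 where s2: "0 < s2" "s2 \<le> 1" "rad c D = s2 *\<^sub>R D" "norm D \<le> c \<longrightarrow> s2 = 1" "norm D > c \<longrightarrow> s2 * norm D = c"
    using rad_scale[of c D] c_pos by auto
  have e: "inner T (Pf (rad 1 T) (rad c D)) = inner lam T * (1 - s1\<^sup>2 * inner T T) - (s2\<^sup>2 * inner lam D) * inner T D / c\<^sup>2"
    unfolding Pf_def s1(3) s2(3)
    by (simp add: inner_diff_right inner_commute[of T lam] power2_eq_square algebra_simps)
  have a1: "\<bar>1 - s1\<^sup>2 * inner T T\<bar> \<le> \<bar>inner T T - 1\<bar>"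
  proof (cases "norm T \<le> 1")
    case True then show ?thesis using s1 by simp
  next
    case False
    then have "s1\<^sup>2 * inner T T = (s1 * norm T)\<^sup>2" by (simp add: power_mult_distrib power2_norm_eq_inner)
    then show ?thesis using s1 False by simp
  qed
  have a2: "\<bar>s2\<^sup>2 * inner lam D\<bar> \<le> c"
  proof -
    have "\<bar>s2\<^sup>2 * inner lam D\<bar> = s2 * \<bar>inner lam (s2 *\<^sub>R D)\<bar>" using s2 by (simp add: power2_eq_square abs_mult)
    also have "\<dots> \<le> 1 * norm (rad c D)" using s2 lam_inner_le[of "s2 *\<^sub>R D"] by (intro mult_mono) auto
    also have "\<dots> \<le> c" using rad_norm[of c D] c_pos by simp
    finally show ?thesis .
  qed
  have "\<bar>inner T (Pf (rad 1 T) (rad c D))\<bar> \<le> \<bar>inner lam T\<bar> * \<bar>1 - s1\<^sup>2 * inner T T\<bar> + \<bar>s2\<^sup>2 * inner lam D\<bar> * \<bar>inner T D\<bar> / c\<^sup>2"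
  proof -
    have "\<bar>inner lam T * (1 - s1\<^sup>2 * inner T T) - (s2\<^sup>2 * inner lam D) * inner T D / c\<^sup>2\<bar>
       \<le> \<bar>inner lam T * (1 - s1\<^sup>2 * inner T T)\<bar> + \<bar>(s2\<^sup>2 * inner lam D) * inner T D / c\<^sup>2\<bar>"
      by (rule abs_triangle_ineq4)
    also have "\<bar>(s2\<^sup>2 * inner lam D) * inner T D / c\<^sup>2\<bar> = \<bar>s2\<^sup>2 * inner lam D\<bar> * \<bar>inner T D\<bar> / c\<^sup>2"
      by (simp only: abs_mult abs_divide abs_power2)
    also have "\<bar>inner lam T * (1 - s1\<^sup>2 * inner T T)\<bar> = \<bar>inner lam T\<bar> * \<bar>1 - s1\<^sup>2 * inner T T\<bar>"
      by (rule abs_mult)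
    finally show ?thesis unfolding e .
  qed
  also have "\<dots> \<le> norm T * \<bar>inner T T - 1\<bar> + c * \<bar>inner T D\<bar> / c\<^sup>2"
    using lam_inner_le[of T] a1 a2 c_pos
    by (intro add_mono mult_mono divide_right_mono) auto
  also have "c * \<bar>inner T D\<bar> / c\<^sup>2 = \<bar>inner T D\<bar> / c" using c_pos by (simp add: power2_eq_square)
  finally show ?thesis .
qed

lemma DP_bound:
  fixes T D :: 'a
  shows "\<bar>inner D (Pf (rad 1 T) (rad c D))\<bar> \<le> norm D * (\<bar>inner D D - c\<^sup>2\<bar> / c\<^sup>2) + \<bar>inner T D\<bar>"
proof -
  obtain s1 where s1: "0 < s1" "s1 \<le> 1" "rad 1 T = s1 *\<^sub>R T" "norm T \<le> 1 \<longrightarrow> s1 = 1" "norm T > 1 \<longrightarrow> s1 * norm T = 1"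
    using rad_scale[of 1 T] by auto
  obtain s2 where s2: "0 < s2" "s2 \<le> 1" "rad c D = s2 *\<^sub>R D" "norm D \<le> c \<longrightarrow> s2 = 1" "norm D > c \<longrightarrow> s2 * norm D = c"
    using rad_scale[of c D] c_pos by auto
  have c2: "c\<^sup>2 > 0" using c_pos by simp
  have e: "inner D (Pf (rad 1 T) (rad c D)) = inner lam D * (1 - s2\<^sup>2 * inner D D / c\<^sup>2) - (s1\<^sup>2 * inner lam T) * inner T D"
    unfolding Pf_def s1(3) s2(3)
    by (simp add: inner_diff_right inner_commute[of D lam] inner_commute[of D T] power2_eq_square algebra_simps diff_divide_distrib)
  have a1: "\<bar>1 - s2\<^sup>2 * inner D D / c\<^sup>2\<bar> \<le> \<bar>inner D D - c\<^sup>2\<bar> / c\<^sup>2"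
  proof (cases "norm D \<le> c")
    case True
    then have "1 - s2\<^sup>2 * inner D D / c\<^sup>2 = - ((inner D D - c\<^sup>2) / c\<^sup>2)" using s2 c2 by (simp add: field_simps)
    then show ?thesis using c2 by (simp add: abs_divide)
  next
    case False
    then have "s2\<^sup>2 * inner D D = (s2 * norm D)\<^sup>2" by (simp add: power_mult_distrib power2_norm_eq_inner)
    then show ?thesis using s2 False c2 by simp
  qed
  have a2: "\<bar>s1\<^sup>2 * inner lam T\<bar> \<le> 1"
  proof -
    have "\<bar>s1\<^sup>2 * inner lam T\<bar> = s1 * \<bar>inner lam (s1 *\<^sub>R T)\<bar>" using s1 by (simp add: power2_eq_square abs_mult)
    also have "\<dots> \<le> 1 * norm (rad 1 T)" using s1 lam_inner_le[of "s1 *\<^sub>R T"] by (intro mult_mono) auto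
    also have "\<dots> \<le> 1" using rad_norm[of 1 T] by simp
    finally show ?thesis .
  qed
  have "\<bar>inner D (Pf (rad 1 T) (rad c D))\<bar> \<le> \<bar>inner lam D\<bar> * \<bar>1 - s2\<^sup>2 * inner D D / c\<^sup>2\<bar> + \<bar>s1\<^sup>2 * inner lam T\<bar> * \<bar>inner T D\<bar>"
  proof -
    have "\<bar>inner lam D * (1 - s2\<^sup>2 * inner D D / c\<^sup>2) - (s1\<^sup>2 * inner lam T) * inner T D\<bar>
       \<le> \<bar>inner lam D * (1 - s2\<^sup>2 * inner D D / c\<^sup>2)\<bar> + \<bar>(s1\<^sup>2 * inner lam T) * inner T D\<bar>"
      by (rule abs_triangle_ineq4)
    then show ?thesis unfolding e abs_mult .
  qed
  also have "\<dots> \<le> norm D * (\<bar>inner D D - c\<^sup>2\<bar> / c\<^sup>2) + 1 * \<bar>inner T D\<bar>"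
    using lam_inner_le[of D] a1 a2 by (intro add_mono mult_mono) auto
  finally show ?thesis by simp
qed

end

context Setup begin

definition gB :: "'a \<times> 'a \<times> real \<Rightarrow> real" where
  "gB x = c\<^sup>2 * clF (snd (snd x)) * inner (Pst x) (Pst x) / k2"

lemma Fld_simps:
  "fst (Fld t x) = fst (snd x)"
  "fst (snd (Fld t x)) = - (c\<^sup>2) *\<^sub>R fst x + (\<beta> t * gB x) *\<^sub>R Pst x"
  "snd (snd (Fld t x)) = \<beta> t * inner lam (rad c (fst (snd x)))"
  unfolding Fld_def Afun_def Bfun_def gB_def by simp_all

lemma lb_gB: "lb gB"
proof -
  have cf: "lb (\<lambda>x::'a \<times> 'a \<times> real. clF (snd (snd x)))" unfolding clF_def
    by (rule lb_clamp[OF lb_ssnd]) (use Fm_pos in simp)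
  show ?thesis unfolding gB_def[abs_def]
    by (intro lb_divide_const lb_mult lb_inner lb_Pst cf lb_const)
qed

lemma comps:
  assumes "acf L u (\<lambda>t. Fld t (u t))"
  shows "acf L (\<lambda>t. fst (u t)) (\<lambda>t. fst (snd (u t)))"
    and "acf L (\<lambda>t. fst (snd (u t))) (\<lambda>t. - (c\<^sup>2) *\<^sub>R fst (u t) + (\<beta> t * gB (u t)) *\<^sub>R Pst (u t))"
    and "acf L (\<lambda>t. snd (snd (u t))) (\<lambda>t. \<beta> t * inner lam (rad c (fst (snd (u t)))))"
  using acf_linear[OF lb_fst assms] acf_linear[OF lb_fsnd assms] acf_linear[OF lb_ssnd assms]
  by (simp_all add: Fld_simps)

lemma inv1:
  assumes ac: "acf L u (\<lambda>t. Fld t (u t))" and init: "u t0 = (\<tau>0, \<tau>1, f0)" and t: "t \<in> {0..L}"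
  shows "inner (fst (u t)) (fst (u t)) = 1 \<and> inner (fst (u t)) (fst (snd (u t))) = 0
    \<and> inner (fst (snd (u t))) (fst (snd (u t))) = c\<^sup>2"
proof -
  define T where "T = (\<lambda>t. fst (u t))"
  define D where "D = (\<lambda>t. fst (snd (u t)))"
  define P where "P = (\<lambda>t. Pst (u t))"
  define B where "B = (\<lambda>t. \<beta> t * gB (u t))"
  define D' where "D' = (\<lambda>t. - (c\<^sup>2) *\<^sub>R T t + B t *\<^sub>R P t)"
  have aT: "acf L T D" using comps(1)[OF ac] unfolding T_def D_def .
  have aD: "acf L D D'" using comps(2)[OF ac] unfolding D_def D'_def T_def B_def P_def .
  obtain MT where MT: "MT \<ge> 0" "\<And>t. t \<in> {0..L} \<Longrightarrow> norm (T t) \<le> MT" using cont_bounded[OF acf_cont[OF aT]] by metis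
  obtain MD where MD: "MD \<ge> 0" "\<And>t. t \<in> {0..L} \<Longrightarrow> norm (D t) \<le> MD" using cont_bounded[OF acf_cont[OF aD]] by metis
  obtain MG KG where MG: "MG \<ge> 0" "\<And>x. norm (gB x) \<le> MG" using lbE[OF lb_gB] by metis
  define MB where "MB = Mb * MG"
  have MB: "MB \<ge> 0" "\<And>t. t \<in> {0..L} \<Longrightarrow> \<bar>B t\<bar> \<le> MB"
  proof -
    show "MB \<ge> 0" unfolding MB_def using Mb MG by simp
    fix t assume t: "t \<in> {0..L}"
    have "\<bar>gB (u t)\<bar> \<le> MG" using MG(2)[of "u t"] by simp
    then show "\<bar>B t\<bar> \<le> MB" unfolding MB_def B_def abs_mult using \<beta>b[OF t] MG(1)
      by (intro mult_mono) auto
  qed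
  note p1 = acf_prod[OF bounded_bilinear_inner aT aT]
  note p2 = acf_prod[OF bounded_bilinear_inner aT aD]
  note p3 = acf_prod[OF bounded_bilinear_inner aD aD]
  define Q where "Q = (\<lambda>t. (inner (T t) (T t) - 1, inner (T t) (D t), inner (D t) (D t) - c\<^sup>2))"
  define q where "q = (\<lambda>t. (inner (D t) (T t) + inner (T t) (D t) - 0,
      inner (D t) (D t) + inner (T t) (D' t), inner (D' t) (D t) + inner (D t) (D' t) - 0))"
  have aQ: "acf L Q q"
    unfolding Q_def q_def
    by (intro acf_pair acf_minus p1 p2 p3 acf_const)
  define K where "K = 3 + c\<^sup>2 + MB * (MT + 1 / c) + 2 * c\<^sup>2 + 2 * MB * (MD / c\<^sup>2 + 1)"
  have K: "K \<ge> 0" unfolding K_def using MB MT MD c_pos by (intro add_nonneg_nonneg mult_nonneg_nonneg) auto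
  have bnd: "norm (q s) \<le> K * norm (Q s)" if s: "s \<in> {0..L}" for s
  proof -
    define x where "x = inner (T s) (T s) - 1"
    define y where "y = inner (T s) (D s)"
    define w where "w = inner (D s) (D s) - c\<^sup>2"
    define N where "N = norm (Q s)"
    have xN: "\<bar>x\<bar> \<le> N" unfolding N_def Q_def x_def
      using norm_fst_le[of "inner (T s) (T s) - 1"] by auto
    have yN: "\<bar>y\<bar> \<le> N" unfolding N_def Q_def y_def
      using norm_snd_le[of "(inner (T s) (D s), inner (D s) (D s) - c\<^sup>2)" "inner (T s) (T s) - 1"]
        norm_fst_le[of "inner (T s) (D s)" "inner (D s) (D s) - c\<^sup>2"] by auto
    have wN: "\<bar>w\<bar> \<le> N" unfolding N_def Q_def w_def
      using norm_snd_le[of "(inner (T s) (D s), inner (D s) (D s) - c\<^sup>2)" "inner (T s) (T s) - 1"]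
        norm_snd_le[of "inner (D s) (D s) - c\<^sup>2" "inner (T s) (D s)"] by auto
    have N0: "N \<ge> 0" unfolding N_def by simp
    have PT: "\<bar>inner (T s) (P s)\<bar> \<le> MT * N + N / c"
    proof -
      have "\<bar>inner (T s) (P s)\<bar> \<le> norm (T s) * \<bar>x\<bar> + \<bar>y\<bar> / c"
        unfolding P_def Pst_def x_def y_def T_def D_def using TP_bound .
      also have "\<dots> \<le> MT * N + N / c"
        using MT(2)[OF s] xN yN c_pos MT(1) by (intro add_mono mult_mono divide_right_mono) auto
      finally show ?thesis .
    qed
    have PD: "\<bar>inner (D s) (P s)\<bar> \<le> MD * (N / c\<^sup>2) + N"
    proof -
      have "\<bar>inner (D s) (P s)\<bar> \<le> norm (D s) * (\<bar>w\<bar> / c\<^sup>2) + \<bar>y\<bar>"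
        unfolding P_def Pst_def w_def y_def T_def D_def using DP_bound .
      also have "\<dots> \<le> MD * (N / c\<^sup>2) + N"
        using MD(2)[OF s] wN yN c_pos MD(1) by (intro add_mono mult_mono divide_right_mono) auto
      finally show ?thesis .
    qed
    have q1: "inner (D s) (T s) + inner (T s) (D s) - 0 = 2 * y" unfolding y_def by (simp add: inner_commute)
    have q2: "inner (D s) (D s) + inner (T s) (D' s) = w - c\<^sup>2 * x + B s * inner (T s) (P s)"
      unfolding w_def x_def D'_def by (simp add: inner_add_right inner_diff_right algebra_simps)
    have q3: "inner (D' s) (D s) + inner (D s) (D' s) - 0 = - 2 * c\<^sup>2 * y + 2 * B s * inner (D s) (P s)"
      unfolding y_def D'_def by (simp add: inner_add_left inner_add_right inner_commute algebra_simps)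
    have b1: "\<bar>2 * y\<bar> \<le> 2 * N" using yN by simp
    have b2: "\<bar>w - c\<^sup>2 * x + B s * inner (T s) (P s)\<bar> \<le> N + c\<^sup>2 * N + MB * (MT * N + N / c)"
    proof -
      have "\<bar>w - c\<^sup>2 * x + B s * inner (T s) (P s)\<bar> \<le> \<bar>w\<bar> + c\<^sup>2 * \<bar>x\<bar> + \<bar>B s\<bar> * \<bar>inner (T s) (P s)\<bar>"
      proof -
        have "\<bar>w - c\<^sup>2 * x + B s * inner (T s) (P s)\<bar> \<le> \<bar>w\<bar> + \<bar>c\<^sup>2 * x\<bar> + \<bar>B s * inner (T s) (P s)\<bar>" by arith
        then show ?thesis by (simp add: abs_mult)
      qed
      also have "\<dots> \<le> N + c\<^sup>2 * N + MB * (MT * N + N / c)"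
        using wN xN MB(2)[OF s] PT MB(1) by (intro add_mono mult_mono mult_left_mono) auto
      finally show ?thesis .
    qed
    have b3: "\<bar>- 2 * c\<^sup>2 * y + 2 * B s * inner (D s) (P s)\<bar> \<le> 2 * c\<^sup>2 * N + 2 * MB * (MD * (N / c\<^sup>2) + N)"
    proof -
      have "\<bar>- 2 * c\<^sup>2 * y + 2 * B s * inner (D s) (P s)\<bar> \<le> 2 * c\<^sup>2 * \<bar>y\<bar> + 2 * (\<bar>B s\<bar> * \<bar>inner (D s) (P s)\<bar>)"
      proof -
        have "\<bar>- 2 * c\<^sup>2 * y + 2 * B s * inner (D s) (P s)\<bar> \<le> \<bar>2 * c\<^sup>2 * y\<bar> + \<bar>2 * (B s * inner (D s) (P s))\<bar>" by arith
        then show ?thesis by (simp add: abs_mult)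
      qed
      also have "\<dots> \<le> 2 * c\<^sup>2 * N + 2 * (MB * (MD * (N / c\<^sup>2) + N))"
        using yN MB(2)[OF s] PD MB(1) by (intro add_mono mult_mono mult_left_mono) auto
      finally show ?thesis by simp
    qed
    have "norm (q s) \<le> \<bar>2 * y\<bar> + (\<bar>w - c\<^sup>2 * x + B s * inner (T s) (P s)\<bar> + \<bar>- 2 * c\<^sup>2 * y + 2 * B s * inner (D s) (P s)\<bar>)"
    proof -
      have "norm (q s) = norm (2 * y, w - c\<^sup>2 * x + B s * inner (T s) (P s), - 2 * c\<^sup>2 * y + 2 * B s * inner (D s) (P s))"
        unfolding q_def q1 q2 q3 by simp
      also have "\<dots> \<le> norm (2 * y) + norm (w - c\<^sup>2 * x + B s * inner (T s) (P s), - 2 * c\<^sup>2 * y + 2 * B s * inner (D s) (P s))"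
        by (rule norm_Pair_le)
      also have "\<dots> \<le> norm (2 * y) + (norm (w - c\<^sup>2 * x + B s * inner (T s) (P s)) + norm (- 2 * c\<^sup>2 * y + 2 * B s * inner (D s) (P s)))"
        by (intro add_left_mono norm_Pair_le)
      finally show ?thesis by simp
    qed
    also have "\<dots> \<le> 2 * N + ((N + c\<^sup>2 * N + MB * (MT * N + N / c)) + (2 * c\<^sup>2 * N + 2 * MB * (MD * (N / c\<^sup>2) + N)))"
      using b1 b2 b3 by linarith
    also have "\<dots> = K * N" unfolding K_def by (simp add: algebra_simps)
    finally show ?thesis unfolding N_def .
  qed
  have Q0: "Q t0 = 0"
  proof -
    have "inner \<tau>0 \<tau>0 = 1" using \<tau>0 by (simp add: power2_norm_eq_inner[symmetric])
    moreover have "inner \<tau>1 \<tau>1 = c\<^sup>2" unfolding c_def by (simp add: power2_norm_eq_inner)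
    ultimately show ?thesis unfolding Q_def T_def D_def using init orth by (simp add: zero_prod_def)
  qed
  have "Q t = 0" by (rule gronwall_zero[OF aQ K bnd t0 Q0 t])
  then show ?thesis unfolding Q_def T_def D_def by (simp add: zero_prod_def)
qed

end

lemma acf_lip_bound:
  assumes "acf L u u'" "\<And>t. t \<in> {0..L} \<Longrightarrow> norm (u' t) \<le> B" "s \<in> {0..L}" "t \<in> {0..L}"
  shows "norm (u t - u s) \<le> B * \<bar>t - s\<bar>"
proof -
  have I: "\<And>s t. 0 \<le> s \<Longrightarrow> s \<le> t \<Longrightarrow> t \<le> L \<Longrightarrow> (u' has_integral (u t - u s)) {s..t}"
    using assms(1) unfolding acf_def by blast
  have *: "norm (u b - u a) \<le> B * (b - a)" if "0 \<le> a" "a \<le> b" "b \<le> L" for a b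
  proof -
    have B0: "B \<ge> 0" using assms(2)[of a] that by (meson atLeastAtMost_iff norm_ge_zero order_trans)
    have "norm (u b - u a) \<le> B * Henstock_Kurzweil_Integration.content (cbox a b)"
      by (rule has_integral_bound[OF B0]) (use I[OF that] assms(2) that in auto)
    then show ?thesis using that by simp
  qed
  show ?thesis
  proof (cases "s \<le> t")
    case True then show ?thesis using *[of s t] assms by auto
  next
    case False then show ?thesis using *[of t s] assms by (auto simp: norm_minus_commute)
  qed
qed

context Setup begin

lemma f_bound:
  assumes ac: "acf L u (\<lambda>t. Fld t (u t))" and init: "u t0 = (\<tau>0, \<tau>1, f0)" and t: "t \<in> {0..L}"
  shows "\<bar>snd (snd (u t))\<bar> \<le> Fm - 1"
proof -
  have b: "norm (\<beta> s * inner lam (rad c (fst (snd (u s))))) \<le> Mb * c" if s: "s \<in> {0..L}" for s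
  proof -
    have "\<bar>inner lam (rad c (fst (snd (u s))))\<bar> \<le> c"
      using lam_inner_le rad_norm[of c] c_pos by (meson less_imp_le order_trans)
    then show ?thesis using \<beta>b[OF s] c_pos by (simp add: abs_mult mult_mono)
  qed
  have "norm (snd (snd (u t)) - snd (snd (u t0))) \<le> Mb * c * \<bar>t - t0\<bar>"
    by (rule acf_lip_bound[OF comps(3)[OF ac] b t0 t])
  moreover have "Mb * c * \<bar>t - t0\<bar> \<le> Mb * c * L"
    using t t0 Mb c_pos by (intro mult_left_mono) auto
  ultimately show ?thesis using init f0 unfolding Fm_def by auto
qed

lemma inv2:
  assumes ac: "acf L u (\<lambda>t. Fld t (u t))" and init: "u t0 = (\<tau>0, \<tau>1, f0)" and t: "t \<in> {0..L}"
  shows "(snd (snd (u t)))\<^sup>2 * (1 - (inner lam (fst (u t)))\<^sup>2 - (inner lam (fst (snd (u t))))\<^sup>2 / c\<^sup>2) = k2"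
proof -
  define T where "T = (\<lambda>t. fst (u t))"
  define D where "D = (\<lambda>t. fst (snd (u t)))"
  define f where "f = (\<lambda>t. snd (snd (u t)))"
  define P where "P = (\<lambda>t. Pst (u t))"
  define D' where "D' = (\<lambda>t. - (c\<^sup>2) *\<^sub>R T t + (\<beta> t * gB (u t)) *\<^sub>R P t)"
  define f' where "f' = (\<lambda>t. \<beta> t * inner lam (rad c (D t)))"
  have aT: "acf L T D" using comps(1)[OF ac] unfolding T_def D_def .
  have aD: "acf L D D'" using comps(2)[OF ac] unfolding D_def D'_def T_def P_def .
  have af: "acf L f f'" using comps(3)[OF ac] unfolding f_def f'_def D_def .
  have i1: "inner (T s) (T s) = 1" "inner (T s) (D s) = 0" "inner (D s) (D s) = c\<^sup>2" if "s \<in> {0..L}" for s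
    using inv1[OF ac init that] unfolding T_def D_def by auto
  have nT: "norm (T s) \<le> 1" if "s \<in> {0..L}" for s using i1(1)[OF that] by (simp add: norm_eq_sqrt_inner)
  have nD: "norm (D s) \<le> c" if "s \<in> {0..L}" for s using i1(3)[OF that] c_pos by (simp add: norm_eq_sqrt_inner)
  have Peq: "P s = Pf (T s) (D s)" if "s \<in> {0..L}" for s
    unfolding P_def Pst_def using rad_id[OF nT[OF that]] rad_id[OF nD[OF that]] unfolding T_def D_def by simp
  define \<alpha> where "\<alpha> = (\<lambda>t. inner lam (T t))"
  define \<gamma> where "\<gamma> = (\<lambda>t. inner lam (D t))"
  define \<pi> where "\<pi> = (\<lambda>t. 1 - \<alpha> t * \<alpha> t - (1 / c\<^sup>2) * (\<gamma> t * \<gamma> t))"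
  have \<pi>eq: "\<pi> s = inner (P s) (P s)" "\<pi> s = inner lam (P s)" if s: "s \<in> {0..L}" for s
    using Pf_sq[OF i1[OF s]] Peq[OF s] unfolding \<pi>_def \<alpha>_def \<gamma>_def by (simp_all add: power2_eq_square)
  have fb: "\<bar>f s\<bar> \<le> Fm" if "s \<in> {0..L}" for s using f_bound[OF ac init that] unfolding f_def by simp
  have gBeq: "gB (u s) = c\<^sup>2 * f s * \<pi> s / k2" if s: "s \<in> {0..L}" for s
  proof -
    have "clF (f s) = f s" unfolding clF_def using fb[OF s] by auto
    then show ?thesis unfolding gB_def using \<pi>eq(1)[OF s] unfolding f_def P_def by simp
  qed
  have a\<alpha>: "acf L \<alpha> \<gamma>" unfolding \<alpha>_def \<gamma>_def by (rule acf_linear[OF bounded_linear_inner_right aT])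
  have a\<gamma>: "acf L \<gamma> (\<lambda>t. inner lam (D' t))" unfolding \<gamma>_def by (rule acf_linear[OF bounded_linear_inner_right aD])
  note aff = acf_prod[OF bounded_bilinear_mult af af]
  note a\<alpha>\<alpha> = acf_prod[OF bounded_bilinear_mult a\<alpha> a\<alpha>]
  note a\<gamma>\<gamma> = acf_prod[OF bounded_bilinear_mult a\<gamma> a\<gamma>]
  have a\<pi>: "acf L \<pi> (\<lambda>t. 0 - (\<gamma> t * \<alpha> t + \<alpha> t * \<gamma> t) - (1 / c\<^sup>2) * (inner lam (D' t) * \<gamma> t + \<gamma> t * inner lam (D' t)))"
    unfolding \<pi>_def by (intro acf_minus acf_const a\<alpha>\<alpha> acf_cmult a\<gamma>\<gamma>)
  define E where "E = (\<lambda>t. f t * f t * \<pi> t - k2)"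
  have aE: "acf L E (\<lambda>t. (f' t * f t + f t * f' t) * \<pi> t + f t * f t * (0 - (\<gamma> t * \<alpha> t + \<alpha> t * \<gamma> t) - (1 / c\<^sup>2) * (inner lam (D' t) * \<gamma> t + \<gamma> t * inner lam (D' t))) - 0)"
    unfolding E_def by (intro acf_minus acf_const acf_prod[OF bounded_bilinear_mult aff a\<pi>])
  define K where "K = 2 * Fm * Mb * c / k2"
  have K: "K \<ge> 0" unfolding K_def using Fm_pos Mb c_pos k2_pos by simp
  have bnd: "norm ((f' s * f s + f s * f' s) * \<pi> s + f s * f s * (0 - (\<gamma> s * \<alpha> s + \<alpha> s * \<gamma> s) - (1 / c\<^sup>2) * (inner lam (D' s) * \<gamma> s + \<gamma> s * inner lam (D' s))) - 0)
      \<le> K * norm (E s)" if s: "s \<in> {0..L}" for s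
  proof -
    have f's: "f' s = \<beta> s * \<gamma> s" unfolding f'_def \<gamma>_def using rad_id[OF nD[OF s]] by simp
    have lD': "inner lam (D' s) = - (c\<^sup>2) * \<alpha> s + \<beta> s * (c\<^sup>2 * f s * \<pi> s / k2) * \<pi> s"
      unfolding D'_def \<alpha>_def using gBeq[OF s] \<pi>eq(2)[OF s] by (simp add: inner_add_right inner_diff_right)
    have c2: "c\<^sup>2 \<noteq> 0" using c_pos by simp
    have k2: "k2 \<noteq> 0" using k2_pos by simp
    have eq: "(f' s * f s + f s * f' s) * \<pi> s + f s * f s * (0 - (\<gamma> s * \<alpha> s + \<alpha> s * \<gamma> s) - (1 / c\<^sup>2) * (inner lam (D' s) * \<gamma> s + \<gamma> s * inner lam (D' s))) - 0
       = - (2 * f s * \<beta> s * \<gamma> s * \<pi> s / k2) * E s"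
      unfolding f's lD' E_def using c2 k2 by (simp add: field_simps power2_eq_square)
    have pi01: "0 \<le> \<pi> s" "\<pi> s \<le> 1"
    proof -
      show "0 \<le> \<pi> s" using \<pi>eq(1)[OF s] by simp
      have "0 \<le> (1 / c\<^sup>2) * (\<gamma> s * \<gamma> s)" by simp
      then show "\<pi> s \<le> 1" unfolding \<pi>_def by (smt (verit) zero_le_square)
    qed
    have gb: "\<bar>\<gamma> s\<bar> \<le> c" unfolding \<gamma>_def using lam_inner_le[of "D s"] nD[OF s] by linarith
    have "\<bar>2 * f s * \<beta> s * \<gamma> s * \<pi> s / k2\<bar> = 2 * \<bar>f s\<bar> * \<bar>\<beta> s\<bar> * \<bar>\<gamma> s\<bar> * \<bar>\<pi> s\<bar> / k2"
      using k2_pos by (simp add: abs_mult abs_divide)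
    also have "\<dots> \<le> 2 * Fm * Mb * c * 1 / k2"
      using fb[OF s] \<beta>b[OF s] gb pi01 k2_pos
      by (intro divide_right_mono mult_mono mult_left_mono) auto
    finally have "\<bar>2 * f s * \<beta> s * \<gamma> s * \<pi> s / k2\<bar> \<le> K" unfolding K_def by simp
    then show ?thesis unfolding eq real_norm_def abs_mult abs_minus
      by (intro mult_right_mono) auto
  qed
  have E0: "E t0 = 0"
  proof -
    have "\<pi> t0 = \<pi>0" unfolding \<pi>_def \<pi>0_def \<alpha>_def \<gamma>_def T_def D_def using init by (simp add: power2_eq_square)
    then show ?thesis unfolding E_def k2_def f_def using init by (simp add: power2_eq_square)
  qed
  have "E t = 0" by (rule gronwall_zero[OF aE K bnd t0 E0 t])
  then show ?thesis unfolding E_def \<pi>_def \<alpha>_def \<gamma>_def f_def T_def D_def by (simp add: power2_eq_square)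
qed

end

context Setup begin

lemma f_pos:
  assumes ac: "acf L u (\<lambda>t. Fld t (u t))" and init: "u t0 = (\<tau>0, \<tau>1, f0)" and t: "t \<in> {0..L}"
  shows "snd (snd (u t)) > 0"
proof -
  define f where "f = (\<lambda>t. snd (snd (u t)))"
  have cf: "continuous_on {0..L} f" unfolding f_def using acf_cont[OF comps(3)[OF ac]] .
  have nz: "f s \<noteq> 0" if "s \<in> {0..L}" for s
    using inv2[OF ac init that] k2_pos unfolding f_def by auto
  have ft0: "f t0 > 0" unfolding f_def using init f0 by simp
  show ?thesis
  proof (rule ccontr)
    assume "\<not> snd (snd (u t)) > 0"
    then have ft: "f t \<le> 0" unfolding f_def by simp
    show False
    proof (cases "t0 \<le> t")
      case True
      obtain x where x: "t0 \<le> x" "x \<le> t" "f x = 0"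
        using IVT2'[of f t 0 t0] ft ft0 True continuous_on_subset[OF cf, of "{t0..t}"] t t0 by auto
      then show False using nz[of x] t t0 by auto
    next
      case False
      obtain x where x: "t \<le> x" "x \<le> t0" "f x = 0"
        using IVT'[of f t 0 t0] ft ft0 False continuous_on_subset[OF cf, of "{t..t0}"] t t0 by auto
      then show False using nz[of x] t t0 by auto
    qed
  qed
qed

lemma in_span:
  assumes ac: "acf L u (\<lambda>t. Fld t (u t))" and init: "u t0 = (\<tau>0, \<tau>1, f0)" and t: "t \<in> {0..L}"
  shows "fst (u t) \<in> span {\<tau>0, \<tau>1, lam}"
proof -
  define T where "T = (\<lambda>t. fst (u t))"
  define D where "D = (\<lambda>t. fst (snd (u t)))"
  define P where "P = (\<lambda>t. Pst (u t))"
  define B where "B = (\<lambda>t. \<beta> t * gB (u t))"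
  define D' where "D' = (\<lambda>t. - (c\<^sup>2) *\<^sub>R T t + B t *\<^sub>R P t)"
  have aT: "acf L T D" using comps(1)[OF ac] unfolding T_def D_def .
  have aD: "acf L D D'" using comps(2)[OF ac] unfolding D_def D'_def T_def B_def P_def .
  have i1: "inner (T s) (T s) = 1" "inner (T s) (D s) = 0" "inner (D s) (D s) = c\<^sup>2" if "s \<in> {0..L}" for s
    using inv1[OF ac init that] unfolding T_def D_def by auto
  have nT: "norm (T s) \<le> 1" if "s \<in> {0..L}" for s using i1(1)[OF that] by (simp add: norm_eq_sqrt_inner)
  have nD: "norm (D s) \<le> c" if "s \<in> {0..L}" for s using i1(3)[OF that] c_pos by (simp add: norm_eq_sqrt_inner)
  have Peq: "P s = Pf (T s) (D s)" if "s \<in> {0..L}" for s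
    unfolding P_def Pst_def using rad_id[OF nT[OF that]] rad_id[OF nD[OF that]] unfolding T_def D_def by simp
  obtain MG KG where MG: "MG \<ge> 0" "\<And>x. norm (gB x) \<le> MG" using lbE[OF lb_gB] by metis
  define MB where "MB = Mb * MG"
  have MB: "MB \<ge> 0" "\<And>t. t \<in> {0..L} \<Longrightarrow> \<bar>B t\<bar> \<le> MB"
  proof -
    show "MB \<ge> 0" unfolding MB_def using Mb MG by simp
    fix t assume t: "t \<in> {0..L}"
    have "\<bar>gB (u t)\<bar> \<le> MG" using MG(2)[of "u t"] by simp
    then show "\<bar>B t\<bar> \<le> MB" unfolding MB_def B_def abs_mult using \<beta>b[OF t] MG(1)
      by (intro mult_mono) auto
  qed
  obtain y z where yz: "y \<in> span {\<tau>0, \<tau>1, lam}" "\<And>w. w \<in> span {\<tau>0, \<tau>1, lam} \<Longrightarrow> orthogonal z w" "T t = y + z"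
    using orthogonal_subspace_decomp_exists by blast
  have z0: "inner z \<tau>0 = 0" "inner z \<tau>1 = 0" "inner z lam = 0"
    using yz(2)[of \<tau>0] yz(2)[of \<tau>1] yz(2)[of lam] by (auto simp: orthogonal_def span_base)
  define G where "G = (\<lambda>s. (inner z (T s), inner z (D s)))"
  have aG: "acf L G (\<lambda>s. (inner z (D s), inner z (D' s)))"
    unfolding G_def by (intro acf_pair acf_linear[OF bounded_linear_inner_right] aT aD)
  define K where "K = 1 + c\<^sup>2 + MB * (1 + 1 / c)"
  have K: "K \<ge> 0" unfolding K_def using MB c_pos by (intro add_nonneg_nonneg mult_nonneg_nonneg) auto
  have bnd: "norm (inner z (D s), inner z (D' s)) \<le> K * norm (G s)" if s: "s \<in> {0..L}" for s
  proof -
    define g1 where "g1 = inner z (T s)"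
    define g2 where "g2 = inner z (D s)"
    define N where "N = norm (G s)"
    have g1N: "\<bar>g1\<bar> \<le> N" unfolding g1_def N_def G_def using norm_fst_le[of "inner z (T s)" "inner z (D s)"] by simp
    have g2N: "\<bar>g2\<bar> \<le> N" unfolding g2_def N_def G_def using norm_snd_le[of "inner z (D s)" "inner z (T s)"] by simp
    have zP: "inner z (P s) = - inner lam (T s) * g1 - (inner lam (D s) / c\<^sup>2) * g2"
      unfolding Peq[OF s] Pf_def g1_def g2_def using z0 by (simp add: inner_diff_right)
    have a1: "\<bar>inner lam (T s)\<bar> \<le> 1" using lam_inner_le[of "T s"] nT[OF s] by linarith
    have a2: "\<bar>inner lam (D s)\<bar> \<le> c" using lam_inner_le[of "D s"] nD[OF s] by linarith
    have zPb: "\<bar>inner z (P s)\<bar> \<le> N + N / c"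
    proof -
      have "\<bar>inner z (P s)\<bar> \<le> \<bar>inner lam (T s)\<bar> * \<bar>g1\<bar> + (\<bar>inner lam (D s)\<bar> / c\<^sup>2) * \<bar>g2\<bar>"
      proof -
        have "\<bar>- inner lam (T s) * g1 - (inner lam (D s) / c\<^sup>2) * g2\<bar> \<le> \<bar>inner lam (T s) * g1\<bar> + \<bar>(inner lam (D s) / c\<^sup>2) * g2\<bar>"
          by arith
        then show ?thesis unfolding zP abs_mult abs_divide by simp
      qed
      also have "\<dots> \<le> 1 * N + (c / c\<^sup>2) * N"
        using a1 a2 g1N g2N c_pos by (intro add_mono mult_mono divide_right_mono) auto
      also have "\<dots> = N + N / c" using c_pos by (simp add: power2_eq_square)
      finally show ?thesis .
    qed
    have zD': "inner z (D' s) = - (c\<^sup>2) * g1 + B s * inner z (P s)"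
      unfolding D'_def g1_def by (simp add: inner_add_right inner_diff_right)
    have "norm (inner z (D s), inner z (D' s)) \<le> \<bar>g2\<bar> + \<bar>- (c\<^sup>2) * g1 + B s * inner z (P s)\<bar>"
      using norm_Pair_le[of "inner z (D s)" "inner z (D' s)"] unfolding zD' g2_def by simp
    also have "\<dots> \<le> \<bar>g2\<bar> + (c\<^sup>2 * \<bar>g1\<bar> + \<bar>B s\<bar> * \<bar>inner z (P s)\<bar>)"
    proof -
      have "\<bar>- (c\<^sup>2) * g1 + B s * inner z (P s)\<bar> \<le> \<bar>(c\<^sup>2) * g1\<bar> + \<bar>B s * inner z (P s)\<bar>" by arith
      then show ?thesis unfolding abs_mult by simp
    qed
    also have "\<dots> \<le> N + (c\<^sup>2 * N + MB * (N + N / c))"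
      using g1N g2N MB(2)[OF s] zPb MB(1) by (intro add_mono mult_mono mult_left_mono) auto
    also have "\<dots> = K * N" unfolding K_def by (simp add: algebra_simps)
    finally show ?thesis unfolding N_def .
  qed
  have G0: "G t0 = 0" unfolding G_def T_def D_def using init z0 by (simp add: zero_prod_def)
  have "G t = 0" by (rule gronwall_zero[OF aG K bnd t0 G0 t])
  then have zT: "inner z (T t) = 0" unfolding G_def by (simp add: zero_prod_def)
  have "inner z y = 0" using yz(2)[OF yz(1)] by (simp add: orthogonal_def)
  then have "inner z z = 0" using zT yz(3) by (simp add: inner_add_right)
  then have "z = 0" by simp
  then show ?thesis using yz unfolding T_def by simp
qed

end

lemma acf_good:
  assumes "acf L u u'" "\<And>t. t \<in> {0..L} \<Longrightarrow> g t = u' t"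
  shows "g absolutely_integrable_on {0..L} \<and> (\<forall>s\<in>{0..L}. \<forall>t\<in>{0..L}. s \<le> t \<longrightarrow> (g has_integral (u t - u s)) {s..t})"
proof -
  have a: "acf L u g" by (rule acf_cong[OF assms(1)]) (use assms(2) in auto)
  then obtain B where I: "\<And>s t. 0 \<le> s \<Longrightarrow> s \<le> t \<Longrightarrow> t \<le> L \<Longrightarrow> (g has_integral (u t - u s)) {s..t}"
    and m: "g \<in> borel_measurable (lebesgue_on {0..L})" and B: "\<forall>t\<in>{0..L}. norm (g t) \<le> B"
    unfolding acf_def by blast
  have "g absolutely_integrable_on {0..L}"
    by (rule measurable_bounded_by_integrable_imp_absolutely_integrable[where g="\<lambda>_. B"]) (use m B in auto)
  then show ?thesis using I by auto
qed

lemma acf_vderiv: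
  assumes "acf L u u'" "continuous_on {0..L} u'" "t \<in> {0..L}"
  shows "(u has_vector_derivative u' t) (at t within {0..L})"
proof -
  have I: "(u' has_integral (u s - u 0)) {0..s}" if "s \<in> {0..L}" for s
    using assms(1) that unfolding acf_def by auto
  have eq: "u s = u 0 + integral {0..s} u'" if "s \<in> {0..L}" for s
    using I[OF that] by (simp add: integral_unique)
  have h: "((\<lambda>s. u 0 + integral {0..s} u') has_vector_derivative u' t) (at t within {0..L})"
    using has_vector_derivative_add[OF has_vector_derivative_const[of "u 0"] integral_has_vector_derivative[OF assms(2,3)]]
    by simp
  show ?thesis by (rule has_vector_derivative_transform[OF assms(3) eq h])
qed

context Setup begin

lemma exist_main:
  "\<exists>\<tau> f. caratheodory_solution \<beta> lam L t0 \<tau>0 \<tau>1 f0 \<tau> f \<and>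
     (\<forall>t\<in>{0..L}. norm (vector_derivative \<tau> (at t within {0..L})) = norm \<tau>1 \<and>
        lam \<bullet> \<tau> t \<noteq> 1 \<and> lam \<bullet> \<tau> t \<noteq> -1 \<and> \<tau> t \<in> span {\<tau>0, \<tau>1, lam})"
proof -
  obtain u where ac: "acf L u (\<lambda>t. Fld t (u t))" and init: "u t0 = (\<tau>0, \<tau>1, f0)"
    using sol_exists by blast
  define T where "T = (\<lambda>t. fst (u t))"
  define D where "D = (\<lambda>t. fst (snd (u t)))"
  define f where "f = (\<lambda>t. snd (snd (u t)))"
  define P where "P = (\<lambda>t. Pst (u t))"
  define D' where "D' = (\<lambda>t. - (c\<^sup>2) *\<^sub>R T t + (\<beta> t * gB (u t)) *\<^sub>R P t)"
  define f' where "f' = (\<lambda>t. \<beta> t * inner lam (rad c (D t)))"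
  have aT: "acf L T D" using comps(1)[OF ac] unfolding T_def D_def .
  have aD: "acf L D D'" using comps(2)[OF ac] unfolding D_def D'_def T_def P_def .
  have af: "acf L f f'" using comps(3)[OF ac] unfolding f_def f'_def D_def .
  have i1: "inner (T s) (T s) = 1" "inner (T s) (D s) = 0" "inner (D s) (D s) = c\<^sup>2" if "s \<in> {0..L}" for s
    using inv1[OF ac init that] unfolding T_def D_def by auto
  have nT: "norm (T s) = 1" if "s \<in> {0..L}" for s using i1(1)[OF that] by (simp add: norm_eq_sqrt_inner)
  have nD: "norm (D s) = c" if "s \<in> {0..L}" for s using i1(3)[OF that] c_pos by (simp add: norm_eq_sqrt_inner)
  have Peq: "P s = Pf (T s) (D s)" if "s \<in> {0..L}" for s
    unfolding P_def Pst_def using rad_id[of "T s" 1] rad_id[of "D s" c] nT[OF that] nD[OF that] unfolding T_def D_def by simp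
  have fpos: "f s > 0" if "s \<in> {0..L}" for s using f_pos[OF ac init that] unfolding f_def .
  have fpi: "(f s)\<^sup>2 * (1 - (inner lam (T s))\<^sup>2 - (inner lam (D s))\<^sup>2 / c\<^sup>2) = k2" if "s \<in> {0..L}" for s
    using inv2[OF ac init that] unfolding f_def T_def D_def .
  have fb: "\<bar>f s\<bar> \<le> Fm" if "s \<in> {0..L}" for s using f_bound[OF ac init that] unfolding f_def by simp
  have vd: "(T has_vector_derivative D t) (at t within {0..L})" if "t \<in> {0..L}" for t
    by (rule acf_vderiv[OF aT acf_cont[OF aD] that])
  have vdeq: "vector_derivative T (at t within {0..L}) = D t" if "t \<in> {0..L}" for t
    by (rule vector_derivative_within_closed_interval[OF L that vd[OF that]])
  have Geq: "(\<beta> t * inverse (f t) * (norm (D t))\<^sup>2) *\<^sub>R proj_perp (T t) (D t) lam - (norm (D t))\<^sup>2 *\<^sub>R T t = D' t"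
    if t: "t \<in> {0..L}" for t
  proof -
    have pp: "proj_perp (T t) (D t) lam = Pf (T t) (D t)"
      unfolding Pf_def by (rule proj_perp_formula[OF i1[OF t] c_pos])
    have nd2: "(norm (D t))\<^sup>2 = c\<^sup>2" using nD[OF t] by simp
    define \<pi> where "\<pi> = 1 - (inner lam (T t))\<^sup>2 - (inner lam (D t))\<^sup>2 / c\<^sup>2"
    have \<pi>P: "inner (P t) (P t) = \<pi>" unfolding \<pi>_def Peq[OF t] by (rule Pf_sq(1)[OF i1[OF t]])
    have clf: "clF (f t) = f t" unfolding clF_def using fb[OF t] by auto
    have gb: "gB (u t) = c\<^sup>2 * f t * \<pi> / k2" unfolding gB_def using \<pi>P clf unfolding P_def f_def by simp
    have fpi': "(f t)\<^sup>2 * \<pi> = k2" using fpi[OF t] unfolding \<pi>_def .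
    have "c\<^sup>2 * f t * \<pi> / k2 = c\<^sup>2 * inverse (f t)"
      using fpi' fpos[OF t] k2_pos by (simp add: field_simps power2_eq_square)
    then show ?thesis unfolding D'_def pp nd2 gb Peq[OF t] by (simp add: algebra_simps)
  qed
  have Heq: "\<beta> t * (lam \<bullet> D t) = f' t" if t: "t \<in> {0..L}" for t
    unfolding f'_def using rad_id[of "D t" c] nD[OF t] by simp
  have gG: "(\<lambda>t. (\<beta> t * inverse (f t) * (norm (vector_derivative T (at t within {0..L})))\<^sup>2) *\<^sub>R
        proj_perp (T t) (vector_derivative T (at t within {0..L})) lam
        - (norm (vector_derivative T (at t within {0..L})))\<^sup>2 *\<^sub>R T t) absolutely_integrable_on {0..L} \<and>
      (\<forall>s\<in>{0..L}. \<forall>t\<in>{0..L}. s \<le> t \<longrightarrow> ((\<lambda>t. (\<beta> t * inverse (f t) * (norm (vector_derivative T (at t within {0..L})))\<^sup>2) *\<^sub>R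
        proj_perp (T t) (vector_derivative T (at t within {0..L})) lam
        - (norm (vector_derivative T (at t within {0..L})))\<^sup>2 *\<^sub>R T t) has_integral (D t - D s)) {s..t})"
    by (rule acf_good[OF aD]) (use Geq vdeq in auto)
  have gH: "(\<lambda>t. \<beta> t * (lam \<bullet> vector_derivative T (at t within {0..L}))) absolutely_integrable_on {0..L} \<and>
      (\<forall>s\<in>{0..L}. \<forall>t\<in>{0..L}. s \<le> t \<longrightarrow> ((\<lambda>t. \<beta> t * (lam \<bullet> vector_derivative T (at t within {0..L}))) has_integral (f t - f s)) {s..t})"
    by (rule acf_good[OF af]) (use Heq vdeq in auto)
  have diff: "\<forall>t\<in>{0..L}. T differentiable (at t within {0..L})"
    using vd unfolding differentiable_def has_vector_derivative_def by blast
  have ints: "\<forall>s\<in>{0..L}. \<forall>t\<in>{0..L}. s \<le> t \<longrightarrow>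
       ((\<lambda>t. (\<beta> t * inverse (f t) * (norm (vector_derivative T (at t within {0..L})))\<^sup>2) *\<^sub>R
        proj_perp (T t) (vector_derivative T (at t within {0..L})) lam
        - (norm (vector_derivative T (at t within {0..L})))\<^sup>2 *\<^sub>R T t) has_integral
         (vector_derivative T (at t within {0..L}) - vector_derivative T (at s within {0..L}))) {s..t} \<and>
       ((\<lambda>t. \<beta> t * (lam \<bullet> vector_derivative T (at t within {0..L}))) has_integral (f t - f s)) {s..t}"
  proof (intro ballI impI)
    fix s t assume s: "s \<in> {0..L}" and t: "t \<in> {0..L}" and st: "s \<le> t"
    show "((\<lambda>t. (\<beta> t * inverse (f t) * (norm (vector_derivative T (at t within {0..L})))\<^sup>2) *\<^sub>R
        proj_perp (T t) (vector_derivative T (at t within {0..L})) lam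
        - (norm (vector_derivative T (at t within {0..L})))\<^sup>2 *\<^sub>R T t) has_integral
         (vector_derivative T (at t within {0..L}) - vector_derivative T (at s within {0..L}))) {s..t} \<and>
       ((\<lambda>t. \<beta> t * (lam \<bullet> vector_derivative T (at t within {0..L}))) has_integral (f t - f s)) {s..t}"
      unfolding vdeq[OF s] vdeq[OF t] using gG gH s t st by blast
  qed
  have inits: "T t0 = \<tau>0" "vector_derivative T (at t0 within {0..L}) = \<tau>1" "f t0 = f0"
    using init vdeq[OF t0] unfolding T_def D_def f_def by auto
  have nf: "\<forall>t\<in>{0..L}. norm (T t) = 1 \<and> 0 < f t" using nT fpos by simp
  have sol: "caratheodory_solution \<beta> lam L t0 \<tau>0 \<tau>1 f0 T f"
    unfolding caratheodory_solution_def Let_def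
    by (intro conjI diff ints inits nf conjunct1[OF gG] conjunct1[OF gH])
  have props: "norm (vector_derivative T (at t within {0..L})) = norm \<tau>1 \<and>
        lam \<bullet> T t \<noteq> 1 \<and> lam \<bullet> T t \<noteq> -1 \<and> T t \<in> span {\<tau>0, \<tau>1, lam}" if t: "t \<in> {0..L}" for t
  proof (intro conjI)
    show "norm (vector_derivative T (at t within {0..L})) = norm \<tau>1" using vdeq[OF t] nD[OF t] c_def by simp
    have ne: "(inner lam (T t))\<^sup>2 \<noteq> 1"
    proof
      assume a: "(inner lam (T t))\<^sup>2 = 1"
      have "(f t)\<^sup>2 * (1 - (inner lam (T t))\<^sup>2 - (inner lam (D t))\<^sup>2 / c\<^sup>2) = - ((f t)\<^sup>2 * ((inner lam (D t))\<^sup>2 / c\<^sup>2))"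
        using a by simp
      also have "\<dots> \<le> 0" by simp
      finally show False using fpi[OF t] k2_pos by simp
    qed
    then show "lam \<bullet> T t \<noteq> 1" "lam \<bullet> T t \<noteq> -1" by auto
    show "T t \<in> span {\<tau>0, \<tau>1, lam}" using in_span[OF ac init t] unfolding T_def .
  qed
  show ?thesis using sol props by blast
qed

end

lemma cont_from_int:
  fixes g :: "real \<Rightarrow> 'v::euclidean_space"
  assumes "g integrable_on {0..L}" "\<And>t. t \<in> {0..L} \<Longrightarrow> (g has_integral (D t - D 0)) {0..t}"
  shows "continuous_on {0..L} D"
proof -
  have "continuous_on {0..L} (\<lambda>t. D 0 + integral {0..t} g)"
    using indefinite_integral_continuous_1[OF assms(1)] by (intro continuous_intros)
  moreover have "D 0 + integral {0..t} g = D t" if "t \<in> {0..L}" for t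
    using assms(2)[OF that] by (simp add: integral_unique)
  ultimately show ?thesis using continuous_on_eq by force
qed

context Setup begin

lemma uniq_acf:
  assumes sol: "caratheodory_solution \<beta> lam L t0 \<tau>0 \<tau>1 f0 T f"
  shows "acf L (\<lambda>t. (T t, vector_derivative T (at t within {0..L}), f t))
            (\<lambda>t. Fld t (T t, vector_derivative T (at t within {0..L}), f t))"
proof -
  define D where "D = (\<lambda>t. vector_derivative T (at t within {0..L}))"
  define G where "G = (\<lambda>t. (\<beta> t * inverse (f t) * (norm (D t))\<^sup>2) *\<^sub>R proj_perp (T t) (D t) lam - (norm (D t))\<^sup>2 *\<^sub>R T t)"
  define H where "H = (\<lambda>t. \<beta> t * (lam \<bullet> D t))"
  have diff: "\<And>t. t \<in> {0..L} \<Longrightarrow> T differentiable (at t within {0..L})"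
    and Gi: "G absolutely_integrable_on {0..L}" and Hi: "H absolutely_integrable_on {0..L}"
    and ints: "\<And>s t. s \<in> {0..L} \<Longrightarrow> t \<in> {0..L} \<Longrightarrow> s \<le> t \<Longrightarrow> (G has_integral (D t - D s)) {s..t} \<and> (H has_integral (f t - f s)) {s..t}"
    and inits: "T t0 = \<tau>0" "D t0 = \<tau>1" "f t0 = f0"
    and nf: "\<And>t. t \<in> {0..L} \<Longrightarrow> norm (T t) = 1 \<and> f t > 0"
    using sol unfolding caratheodory_solution_def Let_def D_def[symmetric] G_def[symmetric] H_def[symmetric]
    by auto
  have vd: "(T has_vector_derivative D t) (at t within {0..L})" if "t \<in> {0..L}" for t
    unfolding D_def using diff[OF that] vector_derivative_works by blast
  have leb: "{0..L} \<in> sets lebesgue" by simp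
  have Gm: "G \<in> borel_measurable (lebesgue_on {0..L})" using Gi absolutely_integrable_measurable[OF leb] by blast
  have Hm: "H \<in> borel_measurable (lebesgue_on {0..L})" using Hi absolutely_integrable_measurable[OF leb] by blast
  have cD: "continuous_on {0..L} D"
    by (rule cont_from_int[of G]) (use Gi ints L in \<open>auto simp: absolutely_integrable_on_def\<close>)
  have cf: "continuous_on {0..L} f"
    by (rule cont_from_int[of H]) (use Hi ints L in \<open>auto simp: absolutely_integrable_on_def\<close>)
  obtain MD where MD: "MD \<ge> 0" "\<And>t. t \<in> {0..L} \<Longrightarrow> norm (D t) \<le> MD" using cont_bounded[OF cD] by metis
  obtain tm where tm: "tm \<in> {0..L}" "\<And>t. t \<in> {0..L} \<Longrightarrow> f tm \<le> f t"
    using continuous_attains_inf[OF compact_Icc _ cf] L by auto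
  define fm where "fm = f tm"
  have fm: "fm > 0" "\<And>t. t \<in> {0..L} \<Longrightarrow> fm \<le> f t" unfolding fm_def using nf[OF tm(1)] tm(2) by auto
  have Gb: "norm (G t) \<le> Mb * (1 / fm) * MD\<^sup>2 + MD\<^sup>2" if t: "t \<in> {0..L}" for t
  proof -
    have pn: "norm (proj_perp (T t) (D t) lam) \<le> 1" using proj_perp_norm[of "T t" "D t" lam] lam by simp
    have invf: "\<bar>inverse (f t)\<bar> \<le> 1 / fm" using fm nf[OF t] fm(2)[OF t]
      by (simp add: inverse_eq_divide frac_le)
    have nD2: "(norm (D t))\<^sup>2 \<le> MD\<^sup>2" using MD(2)[OF t] by (simp add: power_mono)
    have "norm (G t) \<le> \<bar>\<beta> t * inverse (f t) * (norm (D t))\<^sup>2\<bar> * norm (proj_perp (T t) (D t) lam) + (norm (D t))\<^sup>2 * norm (T t)"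
      unfolding G_def by (metis norm_scaleR norm_triangle_ineq4 abs_of_nonneg zero_le_power2)
    also have "\<dots> \<le> (Mb * (1 / fm) * MD\<^sup>2) * 1 + MD\<^sup>2 * 1"
    proof (intro add_mono mult_mono)
      have "\<bar>\<beta> t * inverse (f t) * (norm (D t))\<^sup>2\<bar> = \<bar>\<beta> t\<bar> * \<bar>inverse (f t)\<bar> * (norm (D t))\<^sup>2"
        by (simp add: abs_mult)
      also have "\<dots> \<le> Mb * (1 / fm) * MD\<^sup>2"
        using \<beta>b[OF t] invf nD2 fm(1) Mb by (intro mult_mono) auto
      finally show "\<bar>\<beta> t * inverse (f t) * (norm (D t))\<^sup>2\<bar> \<le> Mb * (1 / fm) * MD\<^sup>2" .
    qed (use pn nD2 nf[OF t] Mb fm(1) in auto)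
    finally show ?thesis by simp
  qed
  have Hb: "norm (H t) \<le> Mb * MD" if t: "t \<in> {0..L}" for t
    unfolding H_def using \<beta>b[OF t] lam_inner_le[of "D t"] MD(2)[OF t] by (simp add: abs_mult mult_mono order_trans)
  have aD: "acf L D G" unfolding acf_def
  proof (intro conjI allI impI)
    fix s t assume "0 \<le> s" "s \<le> t" "t \<le> L"
    then show "(G has_integral (D t - D s)) {s..t}" using ints[of s t] by auto
  next
    show "G \<in> borel_measurable (lebesgue_on {0..L})" by (rule Gm)
    show "\<exists>B. \<forall>t\<in>{0..L}. norm (G t) \<le> B" using Gb by blast
  qed
  have af: "acf L f H" unfolding acf_def
  proof (intro conjI allI impI)
    fix s t assume "0 \<le> s" "s \<le> t" "t \<le> L"
    then show "(H has_integral (f t - f s)) {s..t}" using ints[of s t] by auto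
  next
    show "H \<in> borel_measurable (lebesgue_on {0..L})" by (rule Hm)
    show "\<exists>B. \<forall>t\<in>{0..L}. norm (H t) \<le> B" using Hb by blast
  qed
  have aT: "acf L T D"
  proof -
    have "(D has_integral (T t - T s)) {s..t}" if st: "0 \<le> s" "s \<le> t" "t \<le> L" for s t
      by (rule fundamental_theorem_of_calculus[OF st(2)])
         (use vd st in \<open>auto intro: has_vector_derivative_within_subset[of T _ _ "{0..L}"]\<close>)
    moreover have "D \<in> borel_measurable (lebesgue_on {0..L})" by (rule cont_meas[OF cD])
    ultimately show ?thesis unfolding acf_def using MD by blast
  qed
  have TD: "inner (T t) (D t) = 0" if t: "t \<in> {0..L}" for t
  proof -
    have d1: "((\<lambda>s. inner (T s) (T s)) has_vector_derivative (inner (T t) (D t) + inner (D t) (T t))) (at t within {0..L})"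
      by (rule bounded_bilinear.has_vector_derivative[OF bounded_bilinear_inner vd[OF t] vd[OF t]])
    have one: "inner (T s) (T s) = 1" if "s \<in> {0..L}" for s using nf[OF that] by (simp add: power2_norm_eq_inner[symmetric])
    have d2: "((\<lambda>s. inner (T s) (T s)) has_vector_derivative 0) (at t within {0..L})"
      by (rule has_vector_derivative_transform[OF t _ has_vector_derivative_const[of 1]]) (use one in auto)
    have "inner (T t) (D t) + inner (D t) (T t) = 0"
      using vector_derivative_within_closed_interval[OF L t d1] vector_derivative_within_closed_interval[OF L t d2] by simp
    then show ?thesis by (simp add: inner_commute)
  qed
  have GD: "inner (G t) (D t) = 0" if t: "t \<in> {0..L}" for t
  proof -
    have a: "inner (proj_perp (T t) (D t) lam) (D t) = 0" by (rule proj_perp_orth_D(1))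
    show ?thesis unfolding G_def using a TD[OF t] by (simp add: inner_diff_left)
  qed
  have cc: "c\<^sup>2 = inner \<tau>1 \<tau>1" unfolding c_def by (simp add: power2_norm_eq_inner)
  have DD: "inner (D t) (D t) = c\<^sup>2" if t: "t \<in> {0..L}" for t
  proof -
    have a: "acf L (\<lambda>t. inner (D t) (D t)) (\<lambda>t. inner (G t) (D t) + inner (D t) (G t))"
      by (rule acf_prod[OF bounded_bilinear_inner aD aD])
    have z: "inner (G s) (D s) + inner (D s) (G s) = 0" if "s \<in> {0..L}" for s
      using GD[OF that] by (simp add: inner_commute)
    have "acf L (\<lambda>t. inner (D t) (D t)) (\<lambda>t. 0)" by (rule acf_cong[OF a]) (use z in auto)
    then have "norm (inner (D t) (D t) - inner (D t0) (D t0)) \<le> 0 * \<bar>t - t0\<bar>"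
      by (rule acf_lip_bound) (use t t0 in auto)
    then show ?thesis using inits cc by simp
  qed
  have nD: "norm (D t) = c" if t: "t \<in> {0..L}" for t using DD[OF t] c_pos by (simp add: norm_eq_sqrt_inner)
  have TT: "inner (T t) (T t) = 1" if "t \<in> {0..L}" for t using nf[OF that] by (simp add: power2_norm_eq_inner[symmetric])
  have Geq: "G t = - (c\<^sup>2) *\<^sub>R T t + (\<beta> t * c\<^sup>2 / f t) *\<^sub>R Pf (T t) (D t)" if t: "t \<in> {0..L}" for t
  proof -
    have pp: "proj_perp (T t) (D t) lam = Pf (T t) (D t)"
      unfolding Pf_def by (rule proj_perp_formula[OF TT[OF t] TD[OF t] DD[OF t] c_pos])
    show ?thesis unfolding G_def pp using nD[OF t] by (simp add: algebra_simps divide_inverse)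
  qed
  define \<alpha> where "\<alpha> = (\<lambda>t. inner lam (T t))"
  define \<gamma> where "\<gamma> = (\<lambda>t. inner lam (D t))"
  define \<pi> where "\<pi> = (\<lambda>t. 1 - \<alpha> t * \<alpha> t - (1 / c\<^sup>2) * (\<gamma> t * \<gamma> t))"
  have \<pi>eq: "\<pi> s = inner lam (Pf (T s) (D s))" "\<pi> s = inner (Pf (T s) (D s)) (Pf (T s) (D s))" if s: "s \<in> {0..L}" for s
    using Pf_sq[OF TT[OF s] TD[OF s] DD[OF s]] unfolding \<pi>_def \<alpha>_def \<gamma>_def by (simp_all add: power2_eq_square)
  have a\<alpha>: "acf L \<alpha> \<gamma>" unfolding \<alpha>_def \<gamma>_def by (rule acf_linear[OF bounded_linear_inner_right aT])
  have a\<gamma>: "acf L \<gamma> (\<lambda>t. inner lam (G t))" unfolding \<gamma>_def by (rule acf_linear[OF bounded_linear_inner_right aD])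
  note aff = acf_prod[OF bounded_bilinear_mult af af]
  note a\<alpha>\<alpha> = acf_prod[OF bounded_bilinear_mult a\<alpha> a\<alpha>]
  note a\<gamma>\<gamma> = acf_prod[OF bounded_bilinear_mult a\<gamma> a\<gamma>]
  have a\<pi>: "acf L \<pi> (\<lambda>t. 0 - (\<gamma> t * \<alpha> t + \<alpha> t * \<gamma> t) - (1 / c\<^sup>2) * (inner lam (G t) * \<gamma> t + \<gamma> t * inner lam (G t)))"
    unfolding \<pi>_def by (intro acf_minus acf_const a\<alpha>\<alpha> acf_cmult a\<gamma>\<gamma>)
  have aE: "acf L (\<lambda>t. f t * f t * \<pi> t) (\<lambda>t. (H t * f t + f t * H t) * \<pi> t + f t * f t * (0 - (\<gamma> t * \<alpha> t + \<alpha> t * \<gamma> t) - (1 / c\<^sup>2) * (inner lam (G t) * \<gamma> t + \<gamma> t * inner lam (G t))))"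
    by (rule acf_prod[OF bounded_bilinear_mult aff a\<pi>])
  have ez: "(H s * f s + f s * H s) * \<pi> s + f s * f s * (0 - (\<gamma> s * \<alpha> s + \<alpha> s * \<gamma> s) - (1 / c\<^sup>2) * (inner lam (G s) * \<gamma> s + \<gamma> s * inner lam (G s))) = 0"
    if s: "s \<in> {0..L}" for s
  proof -
    have lG: "inner lam (G s) = - (c\<^sup>2) * \<alpha> s + (\<beta> s * c\<^sup>2 / f s) * \<pi> s"
      unfolding Geq[OF s] \<alpha>_def using \<pi>eq(1)[OF s] by (simp add: inner_add_right inner_diff_right)
    have Hs: "H s = \<beta> s * \<gamma> s" unfolding H_def \<gamma>_def by simp
    have fs: "f s \<noteq> 0" using nf[OF s] by simp
    have c2: "c\<^sup>2 \<noteq> 0" using c_pos by simp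
    show ?thesis unfolding lG Hs using fs c2 by (simp add: field_simps power2_eq_square)
  qed
  have Econst: "f t * f t * \<pi> t = k2" if t: "t \<in> {0..L}" for t
  proof -
    have "acf L (\<lambda>t. f t * f t * \<pi> t) (\<lambda>t. 0)" by (rule acf_cong[OF aE]) (use ez in auto)
    then have "norm (f t * f t * \<pi> t - f t0 * f t0 * \<pi> t0) \<le> 0 * \<bar>t - t0\<bar>"
      by (rule acf_lip_bound) (use t t0 in auto)
    moreover have "\<pi> t0 = \<pi>0" unfolding \<pi>_def \<pi>0_def \<alpha>_def \<gamma>_def using inits by (simp add: power2_eq_square)
    ultimately show ?thesis using inits unfolding k2_def by (simp add: power2_eq_square)
  qed
  have fb: "\<bar>f t\<bar> \<le> Fm" if t: "t \<in> {0..L}" for t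
  proof -
    have Hb': "norm (H s) \<le> Mb * c" if s: "s \<in> {0..L}" for s
      unfolding H_def using \<beta>b[OF s] lam_inner_le[of "D s"] nD[OF s] c_pos by (simp add: abs_mult mult_mono)
    have "norm (f t - f t0) \<le> Mb * c * \<bar>t - t0\<bar>" by (rule acf_lip_bound[OF af Hb' t0 t])
    moreover have "Mb * c * \<bar>t - t0\<bar> \<le> Mb * c * L" using t t0 Mb c_pos by (intro mult_left_mono) auto
    ultimately show ?thesis using inits f0 unfolding Fm_def by auto
  qed
  have eqF: "(D t, G t, H t) = Fld t (T t, D t, f t)" if t: "t \<in> {0..L}" for t
  proof -
    have r1: "rad 1 (T t) = T t" using nf[OF t] by (simp add: rad_id)
    have r2: "rad c (D t) = D t" using nD[OF t] by (simp add: rad_id)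
    have ps: "Pst (T t, D t, f t) = Pf (T t) (D t)" unfolding Pst_def using r1 r2 by simp
    have clf: "clF (f t) = f t" unfolding clF_def using fb[OF t] by auto
    have gb: "gB (T t, D t, f t) = c\<^sup>2 / f t"
    proof -
      have "gB (T t, D t, f t) = c\<^sup>2 * f t * \<pi> t / k2" unfolding gB_def ps using \<pi>eq(2)[OF t] clf by simp
      also have "\<dots> = c\<^sup>2 / f t" using Econst[OF t] nf[OF t] k2_pos by (simp add: field_simps)
      finally show ?thesis .
    qed
    show ?thesis
      using Fld_simps[of t "(T t, D t, f t)"] Geq[OF t] r2 gb ps unfolding H_def
      by (simp add: prod_eq_iff)
  qed
  have "acf L (\<lambda>t. (T t, D t, f t)) (\<lambda>t. (D t, G t, H t))" by (intro acf_pair aT aD af)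
  then show ?thesis by (rule acf_cong) (use eqF in \<open>auto simp: D_def\<close>)
qed

end

context Setup begin
lemma sol_init:
  assumes "caratheodory_solution \<beta> lam L t0 \<tau>0 \<tau>1 f0 T f"
  shows "(T t0, vector_derivative T (at t0 within {0..L}), f t0) = (\<tau>0, \<tau>1, f0)"
  using assms unfolding caratheodory_solution_def Let_def by auto
end

theorem mainTheorem12:
  fixes \<beta> :: "real \<Rightarrow> real" and L t0 f0 :: real and lam \<tau>0 \<tau>1 :: "'a::euclidean_space"
  assumes "L > 0"
    and "bounded_variation_on \<beta> 0 L"
    and "\<exists>m M. 0 < m \<and> (\<forall>t\<in>{0..L}. m \<le> \<beta> t \<and> \<beta> t \<le> M)"
    and "norm lam = 1" and "norm \<tau>0 = 1" and "\<tau>0 \<bullet> \<tau>1 = 0"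
    and "f0 > 0" and "t0 \<in> {0..L}"
    and "\<forall>a b c::real. a *\<^sub>R \<tau>0 + b *\<^sub>R \<tau>1 + c *\<^sub>R lam = 0 \<longrightarrow> a = 0 \<and> b = 0 \<and> c = 0"
  shows "(\<exists>\<tau> f. caratheodory_solution \<beta> lam L t0 \<tau>0 \<tau>1 f0 \<tau> f \<and>
            (\<forall>t\<in>{0..L}. norm (vector_derivative \<tau> (at t within {0..L})) = norm \<tau>1 \<and>
                         lam \<bullet> \<tau> t \<noteq> 1 \<and> lam \<bullet> \<tau> t \<noteq> -1 \<and>
                         \<tau> t \<in> span {\<tau>0, \<tau>1, lam})) \<and>
         (\<forall>\<tau> f \<sigma> g. caratheodory_solution \<beta> lam L t0 \<tau>0 \<tau>1 f0 \<tau> f \<longrightarrow>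
                    caratheodory_solution \<beta> lam L t0 \<tau>0 \<tau>1 f0 \<sigma> g \<longrightarrow>
                    (\<forall>t\<in>{0..L}. \<tau> t = \<sigma> t \<and> f t = g t))"
proof -
  obtain m M where mM: "0 < m" "\<And>t. t \<in> {0..L} \<Longrightarrow> m \<le> \<beta> t \<and> \<beta> t \<le> M" using assms(3) by blast
  define Mb where "Mb = max M 1"
  have Mb: "Mb > 0" "\<And>t. t \<in> {0..L} \<Longrightarrow> \<bar>\<beta> t\<bar> \<le> Mb"
  proof -
    show "Mb > 0" unfolding Mb_def by simp
    fix t assume t: "t \<in> {0..L}"
    then have "m \<le> \<beta> t" "\<beta> t \<le> M" using mM(2) by auto
    then show "\<bar>\<beta> t\<bar> \<le> Mb" unfolding Mb_def using mM(1) by linarith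
  qed
  interpret Setup \<beta> L Mb f0 t0 lam \<tau>0 \<tau>1
    by unfold_locales (use assms Mb bv_measurable[OF assms(2)] in auto)
  show ?thesis
  proof (intro conjI allI impI ballI)
    show "\<exists>\<tau> f. caratheodory_solution \<beta> lam L t0 \<tau>0 \<tau>1 f0 \<tau> f \<and>
            (\<forall>t\<in>{0..L}. norm (vector_derivative \<tau> (at t within {0..L})) = norm \<tau>1 \<and>
                         lam \<bullet> \<tau> t \<noteq> 1 \<and> lam \<bullet> \<tau> t \<noteq> -1 \<and>
                         \<tau> t \<in> span {\<tau>0, \<tau>1, lam})"
      by (rule exist_main)
  next
    fix T f S g t
    assume s1: "caratheodory_solution \<beta> lam L t0 \<tau>0 \<tau>1 f0 T f"
      and s2: "caratheodory_solution \<beta> lam L t0 \<tau>0 \<tau>1 f0 S g" and t: "t \<in> {0..L}"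
    have "(T t, vector_derivative T (at t within {0..L}), f t) = (S t, vector_derivative S (at t within {0..L}), g t)"
      by (rule sol_unique[OF uniq_acf[OF s1] uniq_acf[OF s2] _ t]) (use sol_init[OF s1] sol_init[OF s2] in simp)
    then show "T t = S t" "f t = g t" by auto
  qed
qed


end
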